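(* The linear map $\phi':\mathcal{H}_{WPP}\to\mathbf{WQSym}$ defined by $\phi'(P)=\sum_{g\in WLin(P)} g$ is a Hopf algebra isomorphism from $\mathcal{H}_{WPP}$ onto $(\mathbf{WQSym},.,\Delta)$; moreover $\phi'=\psi\circ\phi$, where $\phi(P)=\sum_{f\in Lin(P)}f$ and $\psi(f)=\sum_{g\prec f} g$.
   Context: A double poset is a finite set with two partial orders $\leq_1,\leq_2$. A weak plane poset is a double poset such that $x\leq_1 y$ and $x\leq_2 y$ imply $x=y$, and $x\preceq y\iff(x\leq_1 y$ or $x\leq_2 y)$ is a total quasi-order; $x\equiv y$ means $x\preceq y$ and $y\preceq x$; $x\ll y\iff(y\leq_1 x$ or $x\leq_2 y)$ is a total order, and $P$ is identified with $[n]$ so that $\ll$ is the natural order. $\mathcal{H}_{WPP}$ is the span of isomorphism classes of weak plane posets, with product $PQ$ on $P\sqcup Q$ ($\leq_1$ the disjoint union; $i\leq_2 j$ iff $i,j$ in the same factor and $i\leq_2 j$ there, or $i\in P,j\in Q$), unit the empty poset, and coproduct $\Delta(P)=\sum_O P_{|P\setminus O}\otimes P_{|O}$ over subsets $O$ upward closed for $\leq_1$. $Lin(P)$: surjections $f:[n]\to[k]$ with $i\leq_1 j\Rightarrow f(i)\leq f(j)$ and $f(i)=f(j)\Rightarrow i\equiv j$. $WLin(P)$: surjections $f:[n]\to[k]$ with $i\leq_1 j\Rightarrow f(i)\leq f(j)$ and ($i\leq_1 j$ and $f(i)=f(j)$) $\Rightarrow i\equiv j$. Surjections are identified with packed words $f(1)\cdots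 f(n)$ (words whose letters form $\{1,\dots,k\}$), which form a basis of $\mathbf{WQSym}$. For packed words $f,g$ of length $n$, $g\prec f$ means: $f(i)\leq f(j)\Rightarrow g(i)\leq g(j)$, and ($i<j$, $f(i)>f(j)$) $\Rightarrow g(i)>g(j)$. $pack$ replaces the letters of a word by their ranks. The product $.$ is $u.v=\sum w$ over packed words $w$ of length $|u|+|v|$ with $pack(w_1\cdots w_{|u|})=u$ and $pack(w_{|u|+1}\cdots)=v$ (e.g. $(1).(1)=(12)+(21)+(11)$). The coproduct is $\Delta(w)=\sum_{k=0}^{\max w} w_{|\leq k}\otimes pack(w_{|>k})$, with $w_{|\leq k}$, $w_{|>k}$ the subwords of letters $\leq k$, $>k$. *)

theory Defs
  imports Main
begin

definition supp :: "('b \<Rightarrow> 'k::zero) \<Rightarrow> 'b set" where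
  "supp a = {x. a x \<noteq> 0}"

definition freevec :: "'b set \<Rightarrow> ('b \<Rightarrow> 'k::zero) set" where
  "freevec B = {a. finite (supp a) \<and> supp a \<subseteq> B}"

text \<open>Linear extension of a map given on basis elements by its matrix M x y
  (coefficient of basis element y in the image of basis element x).\<close>
definition lin_ext :: "('b \<Rightarrow> 'c \<Rightarrow> 'k::comm_semiring_1) \<Rightarrow> ('b \<Rightarrow> 'k) \<Rightarrow> ('c \<Rightarrow> 'k)" where
  "lin_ext M a = (\<lambda>y. \<Sum>x\<in>supp a. a x * M x y)"

definition bilin_ext :: "('b \<Rightarrow> 'b \<Rightarrow> 'c \<Rightarrow> 'k::comm_semiring_1) \<Rightarrow> ('b \<Rightarrow> 'k) \<Rightarrow> ('b \<Rightarrow> 'k) \<Rightarrow> ('c \<Rightarrow> 'k)" where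
  "bilin_ext M a b = (\<lambda>z. \<Sum>x\<in>supp a. \<Sum>y\<in>supp b. a x * b y * M x y z)"

text \<open>Tensor product f \<otimes> g of two matrix-given maps, acting on the tensor square
  (represented as finitely supported functions on pairs of basis elements).\<close>
definition tensor_mat :: "('b \<Rightarrow> 'c \<Rightarrow> 'k::comm_semiring_1) \<Rightarrow> ('b \<Rightarrow> 'c \<Rightarrow> 'k)
     \<Rightarrow> ('b \<times> 'b) \<Rightarrow> ('c \<times> 'c) \<Rightarrow> 'k" where
  "tensor_mat M N = (\<lambda>(x1, x2) (y1, y2). M x1 y1 * N x2 y2)"

definition ind :: "bool \<Rightarrow> 'k::zero_neq_one" where
  "ind b = (if b then 1 else 0)"

text \<open>A weak plane poset on [n] = {1..n}, labelled so that \<ll> is the natural order;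
  this is a canonical representative of its isomorphism class.
  Data: (n, \<le>1, \<le>2) with the orders given as relations.\<close>
type_synonym wppdata = "nat \<times> (nat \<times> nat) set \<times> (nat \<times> nat) set"

definition partial_order_on_set :: "nat set \<Rightarrow> (nat \<times> nat) set \<Rightarrow> bool" where
  "partial_order_on_set A R \<longleftrightarrow> R \<subseteq> A \<times> A \<and> (\<forall>x\<in>A. (x, x) \<in> R) \<and> antisym R \<and> trans R"

definition is_wpp :: "wppdata \<Rightarrow> bool" where
  "is_wpp P = (case P of (n, R1, R2) \<Rightarrow>
      partial_order_on_set {1..n} R1 \<and> partial_order_on_set {1..n} R2
    \<and> (\<forall>x y. (x, y) \<in> R1 \<and> (x, y) \<in> R2 \<longrightarrow> x = y)
    \<comment> \<open>\<preceq> is a total quasi-order\<close>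
    \<and> trans (R1 \<union> R2)
    \<and> (\<forall>x\<in>{1..n}. \<forall>y\<in>{1..n}. (x, y) \<in> R1 \<union> R2 \<or> (y, x) \<in> R1 \<union> R2)
    \<comment> \<open>\<ll> is a total order and equals the natural order on [n]\<close>
    \<and> (\<forall>x\<in>{1..n}. \<forall>y\<in>{1..n}. x \<le> y \<longleftrightarrow> ((y, x) \<in> R1 \<or> (x, y) \<in> R2)))"

definition WPP :: "wppdata set" where
  "WPP = {P. is_wpp P}"

definition shift_rel :: "nat \<Rightarrow> (nat \<times> nat) set \<Rightarrow> (nat \<times> nat) set" where
  "shift_rel k R = {(i + k, j + k) | i j. (i, j) \<in> R}"

definition wpp_prod :: "wppdata \<Rightarrow> wppdata \<Rightarrow> wppdata" where
  "wpp_prod P Q = (case P of (n, R1, R2) \<Rightarrow> case Q of (m, S1, S2) \<Rightarrow>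
     (n + m, R1 \<union> shift_rel n S1,
      R2 \<union> shift_rel n S2 \<union> {(i, j). i \<in> {1..n} \<and> j \<in> {n+1..n+m}}))"

definition empty_wpp :: wppdata where
  "empty_wpp = (0, {}, {})"

text \<open>Rank of i in a finite set S (order-preserving relabelling of S onto [card S]).\<close>
definition rk :: "nat set \<Rightarrow> nat \<Rightarrow> nat" where
  "rk S i = card {y \<in> S. y \<le> i}"

definition restr :: "wppdata \<Rightarrow> nat set \<Rightarrow> wppdata" where
  "restr P S = (case P of (n, R1, R2) \<Rightarrow>
     (card S, {(rk S i, rk S j) | i j. (i, j) \<in> R1 \<and> i \<in> S \<and> j \<in> S},
              {(rk S i, rk S j) | i j. (i, j) \<in> R2 \<and> i \<in> S \<and> j \<in> S}))"

definition upclosed1 :: "wppdata \<Rightarrow> nat set \<Rightarrow> bool" where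
  "upclosed1 P U = (case P of (n, R1, R2) \<Rightarrow>
     U \<subseteq> {1..n} \<and> (\<forall>i j. (i, j) \<in> R1 \<and> i \<in> U \<longrightarrow> j \<in> U))"

definition prodH :: "(wppdata \<Rightarrow> 'k::field) \<Rightarrow> (wppdata \<Rightarrow> 'k) \<Rightarrow> (wppdata \<Rightarrow> 'k)" where
  "prodH = bilin_ext (\<lambda>P Q R. ind (R = wpp_prod P Q))"

definition unitH :: "wppdata \<Rightarrow> 'k::field" where
  "unitH = (\<lambda>P. ind (P = empty_wpp))"

definition coprodH_mat :: "wppdata \<Rightarrow> wppdata \<times> wppdata \<Rightarrow> 'k::field" where
  "coprodH_mat P = (\<lambda>(P1, P2). \<Sum>U\<in>{U. upclosed1 P U}.
      ind (P1 = restr P ({1..fst P} - U) \<and> P2 = restr P U))"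

definition coprodH :: "(wppdata \<Rightarrow> 'k::field) \<Rightarrow> (wppdata \<times> wppdata \<Rightarrow> 'k)" where
  "coprodH = lin_ext coprodH_mat"

definition counitH :: "(wppdata \<Rightarrow> 'k::field) \<Rightarrow> 'k" where
  "counitH a = a empty_wpp"

definition packed :: "nat list \<Rightarrow> bool" where
  "packed w \<longleftrightarrow> (\<exists>k. set w = {1..k})"

definition PW :: "nat list set" where
  "PW = {w. packed w}"

definition pack :: "nat list \<Rightarrow> nat list" where
  "pack w = map (\<lambda>x. card {y \<in> set w. y \<le> x}) w"

definition maxl :: "nat list \<Rightarrow> nat" where
  "maxl w = Max (insert 0 (set w))"

definition prodW :: "(nat list \<Rightarrow> 'k::field) \<Rightarrow> (nat list \<Rightarrow> 'k) \<Rightarrow> (nat list \<Rightarrow> 'k)" where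
  "prodW = bilin_ext (\<lambda>u v w. ind (packed w \<and> length w = length u + length v
       \<and> pack (take (length u) w) = u \<and> pack (drop (length u) w) = v))"

definition unitW :: "nat list \<Rightarrow> 'k::field" where
  "unitW = (\<lambda>w. ind (w = []))"

definition coprodW_mat :: "nat list \<Rightarrow> nat list \<times> nat list \<Rightarrow> 'k::field" where
  "coprodW_mat w = (\<lambda>(u, v). \<Sum>k\<in>{0..maxl w}.
      ind (u = filter (\<lambda>x. x \<le> k) w \<and> v = pack (filter (\<lambda>x. k < x) w)))"

definition coprodW :: "(nat list \<Rightarrow> 'k::field) \<Rightarrow> (nat list \<times> nat list \<Rightarrow> 'k)" where
  "coprodW = lin_ext coprodW_mat"

definition counitW :: "(nat list \<Rightarrow> 'k::field) \<Rightarrow> 'k" where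
  "counitW a = a []"

text \<open>A packed word f of length n is read as the surjection i \<mapsto> f ! (i - 1) on [n].\<close>
definition at :: "nat list \<Rightarrow> nat \<Rightarrow> nat" where
  "at f i = f ! (i - 1)"

definition qle :: "wppdata \<Rightarrow> nat \<Rightarrow> nat \<Rightarrow> bool" where
  "qle P i j = (case P of (n, R1, R2) \<Rightarrow> (i, j) \<in> R1 \<or> (i, j) \<in> R2)"

definition qeq :: "wppdata \<Rightarrow> nat \<Rightarrow> nat \<Rightarrow> bool" where
  "qeq P i j \<longleftrightarrow> qle P i j \<and> qle P j i"

definition Lin :: "wppdata \<Rightarrow> nat list set" where
  "Lin P = (case P of (n, R1, R2) \<Rightarrow>
     {f. packed f \<and> length f = n
       \<and> (\<forall>i\<in>{1..n}. \<forall>j\<in>{1..n}. (i, j) \<in> R1 \<longrightarrow> at f i \<le> at f j)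
       \<and> (\<forall>i\<in>{1..n}. \<forall>j\<in>{1..n}. at f i = at f j \<longrightarrow> qeq P i j)})"

definition WLin :: "wppdata \<Rightarrow> nat list set" where
  "WLin P = (case P of (n, R1, R2) \<Rightarrow>
     {f. packed f \<and> length f = n
       \<and> (\<forall>i\<in>{1..n}. \<forall>j\<in>{1..n}. (i, j) \<in> R1 \<longrightarrow> at f i \<le> at f j)
       \<and> (\<forall>i\<in>{1..n}. \<forall>j\<in>{1..n}. (i, j) \<in> R1 \<and> at f i = at f j \<longrightarrow> qeq P i j)})"

definition prec :: "nat list \<Rightarrow> nat list \<Rightarrow> bool" where
  "prec g f \<longleftrightarrow> packed g \<and> packed f \<and> length g = length f
     \<and> (\<forall>i\<in>{1..length f}. \<forall>j\<in>{1..length f}.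
          (at f i \<le> at f j \<longrightarrow> at g i \<le> at g j)
        \<and> (i < j \<and> at f i > at f j \<longrightarrow> at g i > at g j))"

definition phi :: "(wppdata \<Rightarrow> 'k::field) \<Rightarrow> (nat list \<Rightarrow> 'k)" where
  "phi = lin_ext (\<lambda>P f. ind (f \<in> Lin P))"

definition phi' :: "(wppdata \<Rightarrow> 'k::field) \<Rightarrow> (nat list \<Rightarrow> 'k)" where
  "phi' = lin_ext (\<lambda>P g. ind (g \<in> WLin P))"

definition psi :: "(nat list \<Rightarrow> 'k::field) \<Rightarrow> (nat list \<Rightarrow> 'k)" where
  "psi = lin_ext (\<lambda>f g. ind (prec g f))"

end

theory Submission
  imports Defs "HOL-Library.Product_Lexorder"
begin


definition rkc :: "'a::linorder set \<Rightarrow> 'a \<Rightarrow> nat" where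
  "rkc C x = card {y\<in>C. y \<le> x}"

lemma rkc_mono_iff:
  assumes "finite C" "x \<in> C" "y \<in> C"
  shows "rkc C x \<le> rkc C y \<longleftrightarrow> x \<le> y"
proof
  assume "x \<le> y"
  then show "rkc C x \<le> rkc C y" unfolding rkc_def
    using assms by (intro card_mono) auto
next
  assume h: "rkc C x \<le> rkc C y"
  show "x \<le> y"
  proof (rule ccontr)
    assume "\<not> x \<le> y"
    then have "{z\<in>C. z \<le> y} \<subset> {z\<in>C. z \<le> x}" using assms by auto
    then have "rkc C y < rkc C x" unfolding rkc_def using assms
      by (intro psubset_card_mono) auto
    then show False using h by simp
  qed
qed

lemma rkc_eq_iff:
  assumes "finite C" "x \<in> C" "y \<in> C"
  shows "rkc C x = rkc C y \<longleftrightarrow> x = y"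
  using rkc_mono_iff[OF assms] rkc_mono_iff[OF assms(1,3,2)] by (auto simp: eq_iff)

lemma rkc_range:
  assumes "finite C" "x \<in> C"
  shows "rkc C x \<in> {1..card C}"
proof -
  have "x \<in> {y\<in>C. y \<le> x}" using assms by auto
  moreover have "finite {y\<in>C. y \<le> x}" using assms by simp
  ultimately have "card {y\<in>C. y \<le> x} \<ge> 1"
    by (metis One_nat_def Suc_leI card_gt_0_iff empty_iff)
  moreover have "card {y\<in>C. y \<le> x} \<le> card C" using assms by (intro card_mono) auto
  ultimately show ?thesis unfolding rkc_def by auto
qed

lemma rkc_bij:
  assumes "finite C"
  shows "bij_betw (rkc C) C {1..card C}"
proof -
  have inj: "inj_on (rkc C) C" using rkc_eq_iff[OF assms] by (auto simp: inj_on_def)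
  have sub: "rkc C ` C \<subseteq> {1..card C}" using rkc_range[OF assms] by auto
  have "card (rkc C ` C) = card {1..card C}" using card_image[OF inj] by simp
  then have "rkc C ` C = {1..card C}" using sub by (intro card_subset_eq) auto
  then show ?thesis using inj by (simp add: bij_betw_def)
qed

lemma rkc_interval:
  assumes "x \<in> {1..(k::nat)}" shows "rkc {1..k} x = x"
proof -
  have "{y\<in>{1..k}. y \<le> x} = {1..x}" using assms by auto
  then show ?thesis unfolding rkc_def by simp
qed

lemma at_map_upt:
  assumes "i \<in> {1..n}" shows "at (map h [1..<n+1]) i = h i"
proof -
  have l: "i - 1 < length [1..<n+1]" using assms by auto
  have "map h [1..<n+1] ! (i-1) = h ([1..<n+1] ! (i-1))" using l by (rule nth_map)
  also have "[1..<n+1] ! (i-1) = 1 + (i - 1)" using l by (intro nth_upt) (simp del: upt_Suc)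
  finally show ?thesis unfolding at_def using assms by simp
qed

lemma set_conv_at: "set f = at f ` {1..length f}"
proof
  show "set f \<subseteq> at f ` {1..length f}"
  proof
    fix x assume "x \<in> set f"
    then obtain p where "p < length f" "f ! p = x" by (auto simp: in_set_conv_nth)
    then show "x \<in> at f ` {1..length f}" unfolding at_def by (intro image_eqI[where x="Suc p"]) auto
  qed
  show "at f ` {1..length f} \<subseteq> set f" unfolding at_def by (auto intro!: nth_mem)
qed

lemma at_in_set: "i \<in> {1..length f} \<Longrightarrow> at f i \<in> set f"
  using set_conv_at by auto

lemma card_image_kernel:
  assumes "finite S" "\<forall>p\<in>S. \<forall>q\<in>S. g p = g q \<longleftrightarrow> h p = h q"
  shows "card (g ` S) = card (h ` S)"
proof -
  define F where "F = (\<lambda>x. h (inv_into S g x))"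
  have F: "F (g p) = h p" if "p \<in> S" for p
  proof -
    have "inv_into S g (g p) \<in> S" using that by (intro inv_into_into) auto
    moreover have "g (inv_into S g (g p)) = g p" using that by (intro f_inv_into_f) auto
    ultimately show ?thesis unfolding F_def using assms(2) that by blast
  qed
  have "bij_betw F (g ` S) (h ` S)"
  proof (rule bij_betw_imageI)
    show "inj_on F (g ` S)"
    proof (rule inj_onI)
      fix x y assume "x \<in> g ` S" "y \<in> g ` S" "F x = F y"
      then obtain p q where "p \<in> S" "q \<in> S" "x = g p" "y = g q" "h p = h q" using F by auto
      then show "x = y" using assms(2) by blast
    qed
    show "F ` g ` S = h ` S" using F by (auto simp: image_image)
  qed
  then show ?thesis by (rule bij_betw_same_card)
qed

lemma packed_at_rkc:
  assumes "packed f" "i \<in> {1..length f}"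
  shows "rkc (set f) (at f i) = at f i"
proof -
  obtain k where k: "set f = {1..k}" using assms(1) unfolding packed_def by auto
  show ?thesis using rkc_interval[of "at f i" k] at_in_set[OF assms(2)] k by simp
qed

lemma pattern_eq:
  assumes "packed f" "packed g" "length f = length g"
    and "\<forall>i\<in>{1..length f}. \<forall>j\<in>{1..length f}. at f i \<le> at f j \<longleftrightarrow> at g i \<le> at g j"
  shows "f = g"
proof (rule nth_equalityI)
  show "length f = length g" by fact
  fix p assume p: "p < length f"
  define i where "i = Suc p"
  have i: "i \<in> {1..length f}" using p i_def by auto
  have eqv: "\<forall>a\<in>{1..length f}. \<forall>b\<in>{1..length f}. at f a = at f b \<longleftrightarrow> at g a = at g b"
    using assms(4) by (metis order.eq_iff)
  have "at f i = rkc (set f) (at f i)" using packed_at_rkc[OF assms(1) i] by simp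
  also have "\<dots> = card (at f ` {j\<in>{1..length f}. at f j \<le> at f i})"
    unfolding rkc_def set_conv_at[of f] by (rule arg_cong[where f=card]) auto
  also have "\<dots> = card (at g ` {j\<in>{1..length f}. at f j \<le> at f i})"
    using eqv by (intro card_image_kernel) auto
  also have "{j\<in>{1..length f}. at f j \<le> at f i} = {j\<in>{1..length f}. at g j \<le> at g i}"
    using assms(4) i by auto
  also have "card (at g ` {j\<in>{1..length f}. at g j \<le> at g i}) = rkc (set g) (at g i)"
    unfolding rkc_def set_conv_at[of g] using assms(3) by (intro arg_cong[where f=card]) auto
  also have "\<dots> = at g i" using packed_at_rkc[OF assms(2)] i assms(3) by simp
  finally show "f ! p = g ! p" unfolding at_def i_def by simp
qed

lemma at_pack:
  assumes "i \<in> {1..length w}" shows "at (pack w) i = rkc (set w) (at w i)"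
proof -
  have "i - 1 < length w" using assms by auto
  then show ?thesis unfolding pack_def at_def rkc_def by (subst nth_map) simp_all
qed

lemma length_pack[simp]: "length (pack w) = length w" unfolding pack_def by simp

lemma pack_mono_iff:
  assumes "i \<in> {1..length w}" "j \<in> {1..length w}"
  shows "at (pack w) i \<le> at (pack w) j \<longleftrightarrow> at w i \<le> at w j"
  unfolding at_pack[OF assms(1)] at_pack[OF assms(2)]
  using at_in_set[OF assms(1)] at_in_set[OF assms(2)] by (intro rkc_mono_iff) auto

lemma pack_eq_iff:
  assumes "i \<in> {1..length w}" "j \<in> {1..length w}"
  shows "at (pack w) i = at (pack w) j \<longleftrightarrow> at w i = at w j"
  using pack_mono_iff[OF assms] pack_mono_iff[OF assms(2,1)] by (auto simp: eq_iff)

lemma packed_pack: "packed (pack w)"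
proof -
  have "set (pack w) = rkc (set w) ` set w" unfolding pack_def rkc_def by auto
  also have "\<dots> = {1..card (set w)}" using rkc_bij[of "set w"] by (simp add: bij_betw_def)
  finally show ?thesis unfolding packed_def by blast
qed

definition mkword :: "nat \<Rightarrow> (nat \<Rightarrow> 'a::linorder) \<Rightarrow> nat list" where
  "mkword n c = map (\<lambda>i. rkc (c ` {1..n}) (c i)) [1..<n+1]"

lemma mkword_length[simp]: "length (mkword n c) = n" unfolding mkword_def by simp

lemma mkword_at: "i \<in> {1..n} \<Longrightarrow> at (mkword n c) i = rkc (c ` {1..n}) (c i)"
  unfolding mkword_def by (rule at_map_upt)

lemma mkword_mono_iff:
  assumes "i \<in> {1..n}" "j \<in> {1..n}"
  shows "at (mkword n c) i \<le> at (mkword n c) j \<longleftrightarrow> c i \<le> c j"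
  using rkc_mono_iff[of "c ` {1..n}" "c i" "c j"] assms by (simp add: mkword_at)

lemma mkword_packed: "packed (mkword n c)"
proof -
  have e: "set [1..<n+1] = {1..n}" by auto
  have "set (mkword n c) = rkc (c ` {1..n}) ` (c ` {1..n})" unfolding mkword_def set_map e
    by (simp add: image_image)
  also have "\<dots> = {1..card (c ` {1..n})}" using rkc_bij[of "c ` {1..n}"] by (simp add: bij_betw_def)
  finally show ?thesis unfolding packed_def by blast
qed


definition Pw :: "nat list \<Rightarrow> wppdata" where
  "Pw v = (length v,
     {(a, b). a \<in> {1..length v} \<and> b \<in> {1..length v} \<and> b \<le> a \<and> at v a \<le> at v b},
     {(a, b). a \<in> {1..length v} \<and> b \<in> {1..length v} \<and> a \<le> b \<and> at v a \<le> at v b})"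

lemma Pw_wpp: "is_wpp (Pw v)"
proof -
  define n where "n = length v"
  define R1 where "R1 = {(a, b). a \<in> {1..n} \<and> b \<in> {1..n} \<and> b \<le> a \<and> at v a \<le> at v b}"
  define R2 where "R2 = {(a, b). a \<in> {1..n} \<and> b \<in> {1..n} \<and> a \<le> b \<and> at v a \<le> at v b}"
  have P: "Pw v = (n, R1, R2)" unfolding Pw_def n_def R1_def R2_def by simp
  have U: "R1 \<union> R2 = {(a, b). a \<in> {1..n} \<and> b \<in> {1..n} \<and> at v a \<le> at v b}"
    unfolding R1_def R2_def by auto
  have a1: "partial_order_on_set {1..n} R1"
    unfolding partial_order_on_set_def
  proof (intro conjI)
    show "R1 \<subseteq> {1..n} \<times> {1..n}" unfolding R1_def by auto
    show "\<forall>x\<in>{1..n}. (x, x) \<in> R1" unfolding R1_def by auto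
    show "antisym R1" unfolding R1_def antisym_def by auto
    show "trans R1" unfolding R1_def trans_def by (auto intro: order_trans)
  qed
  have a2: "partial_order_on_set {1..n} R2"
    unfolding partial_order_on_set_def
  proof (intro conjI)
    show "R2 \<subseteq> {1..n} \<times> {1..n}" unfolding R2_def by auto
    show "\<forall>x\<in>{1..n}. (x, x) \<in> R2" unfolding R2_def by auto
    show "antisym R2" unfolding R2_def antisym_def by auto
    show "trans R2" unfolding R2_def trans_def by (auto intro: order_trans)
  qed
  have a3: "\<forall>x y. (x, y) \<in> R1 \<and> (x, y) \<in> R2 \<longrightarrow> x = y" unfolding R1_def R2_def by auto
  have a4: "trans (R1 \<union> R2)" unfolding U trans_def by (auto intro: order_trans)
  have a5: "\<forall>x\<in>{1..n}. \<forall>y\<in>{1..n}. (x, y) \<in> R1 \<union> R2 \<or> (y, x) \<in> R1 \<union> R2"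
    unfolding U by (auto simp: nat_le_linear)
  have a6: "\<forall>x\<in>{1..n}. \<forall>y\<in>{1..n}. x \<le> y \<longleftrightarrow> ((y, x) \<in> R1 \<or> (x, y) \<in> R2)"
  proof (intro ballI iffI)
    fix x y assume xy: "x \<in> {1..n}" "y \<in> {1..n}" "x \<le> y"
    show "(y, x) \<in> R1 \<or> (x, y) \<in> R2"
    proof (cases "at v x \<le> at v y")
      case True then show ?thesis using xy unfolding R2_def by simp
    next
      case False then show ?thesis using xy unfolding R1_def by simp
    qed
  next
    fix x y assume "x \<in> {1..n}" "y \<in> {1..n}" "(y, x) \<in> R1 \<or> (x, y) \<in> R2"
    then show "x \<le> y" unfolding R1_def R2_def by auto
  qed
  show ?thesis unfolding is_wpp_def P prod.case using a1 a2 a3 a4 a5 a6 by blast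
qed

lemma qle_Pw: "qle (Pw v) i j \<longleftrightarrow> i \<in> {1..length v} \<and> j \<in> {1..length v} \<and> at v i \<le> at v j"
proof -
  have "qle (Pw v) i j \<longleftrightarrow> (i, j) \<in> fst (snd (Pw v)) \<or> (i, j) \<in> snd (snd (Pw v))"
    by (simp add: qle_def Pw_def)
  also have "\<dots> \<longleftrightarrow> i \<in> {1..length v} \<and> j \<in> {1..length v} \<and> at v i \<le> at v j"
    unfolding Pw_def fst_conv snd_conv mem_Collect_eq case_prod_conv
    using nat_le_linear[of i j] by blast
  finally show ?thesis .
qed

lemma qeq_Pw: "qeq (Pw v) i j \<longleftrightarrow> i \<in> {1..length v} \<and> j \<in> {1..length v} \<and> at v i = at v j"
  unfolding qeq_def qle_Pw by (auto intro: antisym)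

lemma wpp_Pw:
  assumes "is_wpp P"
  shows "\<exists>v\<in>PW. P = Pw v"
proof -
  obtain n R1 R2 where P: "P = (n, R1, R2)" by (cases P) auto
  define Q where "Q = R1 \<union> R2"
  have po1: "partial_order_on_set {1..n} R1" and po2: "partial_order_on_set {1..n} R2"
    and tQ: "trans Q" and tot: "\<forall>x\<in>{1..n}. \<forall>y\<in>{1..n}. (x, y) \<in> Q \<or> (y, x) \<in> Q"
    and ll: "\<forall>x\<in>{1..n}. \<forall>y\<in>{1..n}. x \<le> y \<longleftrightarrow> ((y, x) \<in> R1 \<or> (x, y) \<in> R2)"
    using assms unfolding is_wpp_def P Q_def prod.case by blast+
  have R1s: "R1 \<subseteq> {1..n} \<times> {1..n}" and R1r: "\<forall>x\<in>{1..n}. (x, x) \<in> R1"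
    using po1 unfolding partial_order_on_set_def by auto
  have R2s: "R2 \<subseteq> {1..n} \<times> {1..n}" and R2r: "\<forall>x\<in>{1..n}. (x, x) \<in> R2"
    using po2 unfolding partial_order_on_set_def by auto
  define c where "c i = card {j\<in>{1..n}. (j, i) \<in> Q}" for i
  have cQ: "c i \<le> c j \<longleftrightarrow> (i, j) \<in> Q" if ij: "i \<in> {1..n}" "j \<in> {1..n}" for i j
  proof
    assume "(i, j) \<in> Q"
    then have "{k\<in>{1..n}. (k, i) \<in> Q} \<subseteq> {k\<in>{1..n}. (k, j) \<in> Q}"
      using tQ unfolding trans_def by blast
    then show "c i \<le> c j" unfolding c_def by (intro card_mono) auto
  next
    assume h: "c i \<le> c j"
    show "(i, j) \<in> Q"
    proof (rule ccontr)
      assume nQ: "(i, j) \<notin> Q"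
      then have ji: "(j, i) \<in> Q" using tot ij by blast
      have "{k\<in>{1..n}. (k, j) \<in> Q} \<subseteq> {k\<in>{1..n}. (k, i) \<in> Q}"
        using tQ ji unfolding trans_def by blast
      moreover have "i \<in> {k\<in>{1..n}. (k, i) \<in> Q}" using R1r ij unfolding Q_def by auto
      moreover have "i \<notin> {k\<in>{1..n}. (k, j) \<in> Q}" using nQ by auto
      ultimately have "{k\<in>{1..n}. (k, j) \<in> Q} \<subset> {k\<in>{1..n}. (k, i) \<in> Q}" by blast
      then have "c j < c i" unfolding c_def by (intro psubset_card_mono) auto
      then show False using h by simp
    qed
  qed
  define v where "v = mkword n c"
  have vQ: "at v i \<le> at v j \<longleftrightarrow> (i, j) \<in> Q" if "i \<in> {1..n}" "j \<in> {1..n}" for i j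
    unfolding v_def using mkword_mono_iff[OF that, where c=c] cQ[OF that] by simp
  have lv: "length v = n" unfolding v_def by simp
  have e1: "R1 = {(a, b). a \<in> {1..n} \<and> b \<in> {1..n} \<and> b \<le> a \<and> at v a \<le> at v b}"
  proof (intro set_eqI iffI)
    fix x assume x: "x \<in> R1"
    obtain a b where ab: "x = (a, b)" by (cases x) auto
    have r: "a \<in> {1..n}" "b \<in> {1..n}" using R1s x ab by auto
    have "b \<le> a" using ll r x ab by blast
    moreover have "at v a \<le> at v b" using vQ[OF r] x ab unfolding Q_def by auto
    ultimately show "x \<in> {(a, b). a \<in> {1..n} \<and> b \<in> {1..n} \<and> b \<le> a \<and> at v a \<le> at v b}"
      using r ab by auto
  next
    fix x assume "x \<in> {(a, b). a \<in> {1..n} \<and> b \<in> {1..n} \<and> b \<le> a \<and> at v a \<le> at v b}"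
    then obtain a b where ab: "x = (a, b)" and r: "a \<in> {1..n}" "b \<in> {1..n}" and ba: "b \<le> a"
      and le: "at v a \<le> at v b" by auto
    have "(a, b) \<in> Q" using vQ[OF r] le by simp
    then consider "(a, b) \<in> R1" | "(a, b) \<in> R2" unfolding Q_def by auto
    then show "x \<in> R1"
    proof cases
      case 1 then show ?thesis using ab by simp
    next
      case 2
      then have "a \<le> b" using ll r by blast
      then have "a = b" using ba by simp
      then show ?thesis using R1r r ab by simp
    qed
  qed
  have e2: "R2 = {(a, b). a \<in> {1..n} \<and> b \<in> {1..n} \<and> a \<le> b \<and> at v a \<le> at v b}"
  proof (intro set_eqI iffI)
    fix x assume x: "x \<in> R2"
    obtain a b where ab: "x = (a, b)" by (cases x) auto
    have r: "a \<in> {1..n}" "b \<in> {1..n}" using R2s x ab by auto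
    have "a \<le> b" using ll r x ab by blast
    moreover have "at v a \<le> at v b" using vQ[OF r] x ab unfolding Q_def by auto
    ultimately show "x \<in> {(a, b). a \<in> {1..n} \<and> b \<in> {1..n} \<and> a \<le> b \<and> at v a \<le> at v b}"
      using r ab by auto
  next
    fix x assume "x \<in> {(a, b). a \<in> {1..n} \<and> b \<in> {1..n} \<and> a \<le> b \<and> at v a \<le> at v b}"
    then obtain a b where ab: "x = (a, b)" and r: "a \<in> {1..n}" "b \<in> {1..n}" and ba: "a \<le> b"
      and le: "at v a \<le> at v b" by auto
    have "(a, b) \<in> Q" using vQ[OF r] le by simp
    then consider "(a, b) \<in> R1" | "(a, b) \<in> R2" unfolding Q_def by auto
    then show "x \<in> R2"
    proof cases
      case 2 then show ?thesis using ab by simp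
    next
      case 1
      then have "b \<le> a" using ll r by blast
      then have "a = b" using ba by simp
      then show ?thesis using R2r r ab by simp
    qed
  qed
  have "P = Pw v" unfolding P Pw_def lv using e1 e2 by simp
  moreover have "v \<in> PW" unfolding PW_def v_def using mkword_packed by simp
  ultimately show ?thesis by blast
qed

lemma Pw_inj:
  assumes "v \<in> PW" "v' \<in> PW" "Pw v = Pw v'"
  shows "v = v'"
proof (rule pattern_eq)
  show "packed v" "packed v'" using assms unfolding PW_def by auto
  have l: "length v = length v'" using assms(3) unfolding Pw_def by simp
  then show "length v = length v'" .
  show "\<forall>i\<in>{1..length v}. \<forall>j\<in>{1..length v}. at v i \<le> at v j \<longleftrightarrow> at v' i \<le> at v' j"
  proof (intro ballI)
    fix i j assume ij: "i \<in> {1..length v}" "j \<in> {1..length v}"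
    have q: "qle (Pw v) i j = qle (Pw v') i j" using assms(3) by simp
    then show "at v i \<le> at v j \<longleftrightarrow> at v' i \<le> at v' j" using ij l unfolding qle_Pw by simp
  qed
qed

lemma WPP_Pw: "WPP = Pw ` PW"
proof
  show "WPP \<subseteq> Pw ` PW"
  proof
    fix P assume "P \<in> WPP"
    then have "is_wpp P" by (simp add: WPP_def)
    from wpp_Pw[OF this] show "P \<in> Pw ` PW" by blast
  qed
  show "Pw ` PW \<subseteq> WPP" using Pw_wpp by (auto simp: WPP_def)
qed

lemma WLin_alt: "f \<in> WLin P \<longleftrightarrow> packed f \<and> length f = fst P
   \<and> (\<forall>i\<in>{1..fst P}. \<forall>j\<in>{1..fst P}. (i, j) \<in> fst (snd P) \<longrightarrow> at f i \<le> at f j)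
   \<and> (\<forall>i\<in>{1..fst P}. \<forall>j\<in>{1..fst P}. (i, j) \<in> fst (snd P) \<and> at f i = at f j \<longrightarrow> qeq P i j)"
  by (cases P) (simp add: WLin_def)

lemma Lin_alt: "f \<in> Lin P \<longleftrightarrow> packed f \<and> length f = fst P
   \<and> (\<forall>i\<in>{1..fst P}. \<forall>j\<in>{1..fst P}. (i, j) \<in> fst (snd P) \<longrightarrow> at f i \<le> at f j)
   \<and> (\<forall>i\<in>{1..fst P}. \<forall>j\<in>{1..fst P}. at f i = at f j \<longrightarrow> qeq P i j)"
  by (cases P) (simp add: Lin_def)

lemma fst_Pw[simp]: "fst (Pw v) = length v" by (simp add: Pw_def)
lemma R1_Pw: "(a, b) \<in> fst (snd (Pw v)) \<longleftrightarrow> a \<in> {1..length v} \<and> b \<in> {1..length v} \<and> b \<le> a \<and> at v a \<le> at v b"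
  by (simp add: Pw_def)

lemma WLin_Pw: "g \<in> WLin (Pw v) \<longleftrightarrow> packed g \<and> length g = length v \<and>
   (\<forall>a\<in>{1..length v}. \<forall>b\<in>{1..length v}. b \<le> a \<longrightarrow> at v a \<le> at v b \<longrightarrow>
       at g a \<le> at g b \<and> (at g a = at g b \<longrightarrow> at v a = at v b))"
  unfolding WLin_alt fst_Pw R1_Pw qeq_Pw by blast

lemma Lin_Pw: "f \<in> Lin (Pw v) \<longleftrightarrow> packed f \<and> length f = length v \<and>
   (\<forall>a\<in>{1..length v}. \<forall>b\<in>{1..length v}. b \<le> a \<longrightarrow> at v a \<le> at v b \<longrightarrow> at f a \<le> at f b) \<and>
   (\<forall>a\<in>{1..length v}. \<forall>b\<in>{1..length v}. at f a = at f b \<longrightarrow> at v a = at v b)"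
  unfolding Lin_alt fst_Pw R1_Pw qeq_Pw by blast


definition sc :: "nat list \<Rightarrow> nat \<Rightarrow> nat \<Rightarrow> nat" where
  "sc g i j = (if at g i < at g j then 2 else if at g i = at g j then 1 else 0)"

definition pairs :: "nat \<Rightarrow> (nat \<times> nat) set" where
  "pairs n = {(i, j). i \<in> {1..n} \<and> j \<in> {1..n} \<and> i < j}"

definition rnk :: "nat list \<Rightarrow> nat" where
  "rnk g = (\<Sum>p\<in>pairs (length g). sc g (fst p) (snd p))"

lemma finite_pairs: "finite (pairs n)"
proof -
  have "pairs n \<subseteq> {1..n} \<times> {1..n}" unfolding pairs_def by auto
  then show ?thesis by (rule finite_subset) simp
qed

lemma sc_ge1: "at g i \<le> at g j \<longleftrightarrow> 1 \<le> sc g i j" unfolding sc_def by auto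
lemma sc_le1: "at g j \<le> at g i \<longleftrightarrow> sc g i j \<le> 1" unfolding sc_def by auto
lemma sc_le2: "sc g i j \<le> 2" unfolding sc_def by auto

lemma diag: "v \<in> PW \<Longrightarrow> v \<in> WLin (Pw v)"
  unfolding WLin_Pw PW_def by auto

lemma TRI:
  assumes "v' \<in> PW" "v \<in> WLin (Pw v')" "v \<noteq> v'"
  shows "rnk v < rnk v'"
proof -
  have pv: "packed v" and lv: "length v = length v'"
    and W: "\<forall>a\<in>{1..length v'}. \<forall>b\<in>{1..length v'}. b \<le> a \<longrightarrow> at v' a \<le> at v' b \<longrightarrow>
       at v a \<le> at v b \<and> (at v a = at v b \<longrightarrow> at v' a = at v' b)"
    using assms(2) unfolding WLin_Pw by blast+
  define n where "n = length v'"
  have le: "sc v i j \<le> sc v' i j" if ij: "(i, j) \<in> pairs n" for i j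
  proof -
    have r: "i \<in> {1..length v'}" "j \<in> {1..length v'}" "i < j" using ij unfolding pairs_def n_def by auto
    consider "at v' i < at v' j" | "at v' i = at v' j" | "at v' j < at v' i" by linarith
    then show ?thesis
    proof cases
      case 1 then show ?thesis using sc_le2[of v i j] unfolding sc_def[of v' i j] by simp
    next
      case 2
      then have "at v j \<le> at v i" using W r by auto
      then show ?thesis using 2 unfolding sc_def by auto
    next
      case 3
      then have "at v j \<le> at v i \<and> (at v j = at v i \<longrightarrow> at v' j = at v' i)" using W r by auto
      then have "at v j < at v i" using 3 by auto
      then show ?thesis using 3 unfolding sc_def by auto
    qed
  qed
  have ex: "\<exists>p\<in>pairs n. sc v (fst p) (snd p) < sc v' (fst p) (snd p)"
  proof (rule ccontr)
    assume "\<not> ?thesis"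
    then have eq: "sc v i j = sc v' i j" if "(i, j) \<in> pairs n" for i j
      using le[OF that] that by fastforce
    have "v = v'"
    proof (rule pattern_eq)
      show "packed v" by fact
      show "packed v'" using assms(1) unfolding PW_def by simp
      show "length v = length v'" by fact
      show "\<forall>i\<in>{1..length v}. \<forall>j\<in>{1..length v}. at v i \<le> at v j \<longleftrightarrow> at v' i \<le> at v' j"
      proof (intro ballI)
        fix i j assume r: "i \<in> {1..length v}" "j \<in> {1..length v}"
        consider "i = j" | "i < j" | "j < i" by linarith
        then show "at v i \<le> at v j \<longleftrightarrow> at v' i \<le> at v' j"
        proof cases
          case 1 then show ?thesis by simp
        next
          case 2
          then have "(i, j) \<in> pairs n" using r lv unfolding pairs_def n_def by auto
          then show ?thesis using eq sc_ge1[of v i j] sc_ge1[of v' i j] by simp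
        next
          case 3
          then have "(j, i) \<in> pairs n" using r lv unfolding pairs_def n_def by auto
          then show ?thesis using eq sc_le1[of v i j] sc_le1[of v' i j] by simp
        qed
      qed
    qed
    then show False using assms(3) by simp
  qed
  have "(\<Sum>p\<in>pairs n. sc v (fst p) (snd p)) < (\<Sum>p\<in>pairs n. sc v' (fst p) (snd p))"
    using finite_pairs le ex by (intro sum_strict_mono_ex1) auto
  then show ?thesis unfolding rnk_def n_def lv .
qed

lemma Lin_PwD1: "f \<in> Lin (Pw v) \<Longrightarrow> a \<in> {1..length v} \<Longrightarrow> b \<in> {1..length v} \<Longrightarrow> b \<le> a
   \<Longrightarrow> at v a \<le> at v b \<Longrightarrow> at f a \<le> at f b"
  unfolding Lin_Pw by blast
lemma Lin_PwD2: "f \<in> Lin (Pw v) \<Longrightarrow> a \<in> {1..length v} \<Longrightarrow> b \<in> {1..length v}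
   \<Longrightarrow> at f a = at f b \<Longrightarrow> at v a = at v b"
  unfolding Lin_Pw by blast
lemma Lin_PwD3: "f \<in> Lin (Pw v) \<Longrightarrow> packed f \<and> length f = length v"
  unfolding Lin_Pw by blast
lemma precD1: "prec g f \<Longrightarrow> i \<in> {1..length f} \<Longrightarrow> j \<in> {1..length f} \<Longrightarrow>
   at f i \<le> at f j \<Longrightarrow> at g i \<le> at g j"
  unfolding prec_def by blast
lemma precD2: "prec g f \<Longrightarrow> i \<in> {1..length f} \<Longrightarrow> j \<in> {1..length f} \<Longrightarrow>
   i < j \<Longrightarrow> at f j < at f i \<Longrightarrow> at g j < at g i"
  unfolding prec_def by blast
lemma precD3: "prec g f \<Longrightarrow> packed g \<and> packed f \<and> length g = length f"
  unfolding prec_def by blast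
lemma WLin_PwD1: "g \<in> WLin (Pw v) \<Longrightarrow> a \<in> {1..length v} \<Longrightarrow> b \<in> {1..length v} \<Longrightarrow> b \<le> a
   \<Longrightarrow> at v a \<le> at v b \<Longrightarrow> at g a \<le> at g b"
  unfolding WLin_Pw by blast
lemma WLin_PwD2: "g \<in> WLin (Pw v) \<Longrightarrow> a \<in> {1..length v} \<Longrightarrow> b \<in> {1..length v} \<Longrightarrow> b \<le> a
   \<Longrightarrow> at v a \<le> at v b \<Longrightarrow> at g a = at g b \<Longrightarrow> at v a = at v b"
  unfolding WLin_Pw by blast
lemma WLin_PwD3: "g \<in> WLin (Pw v) \<Longrightarrow> packed g \<and> length g = length v"
  unfolding WLin_Pw by blast

lemma prec_WLin:
  assumes f: "f \<in> Lin (Pw v)" and p: "prec g f"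
  shows "g \<in> WLin (Pw v)"
proof -
  have lf: "length f = length v" using Lin_PwD3[OF f] by simp
  have pg: "packed g" "length g = length v" using precD3[OF p] lf by auto
  show ?thesis unfolding WLin_Pw
  proof (intro conjI ballI impI)
    show "packed g" "length g = length v" by fact+
    fix a b assume r: "a \<in> {1..length v}" "b \<in> {1..length v}" and ba: "b \<le> a"
      and va: "at v a \<le> at v b"
    have r': "a \<in> {1..length f}" "b \<in> {1..length f}" using r lf by auto
    have fab: "at f a \<le> at f b" by (rule Lin_PwD1[OF f r ba va])
    then show "at g a \<le> at g b" by (rule precD1[OF p r'])
    assume gab: "at g a = at g b"
    show "at v a = at v b"
    proof (rule ccontr)
      assume ne: "at v a \<noteq> at v b"
      then have "at f a \<noteq> at f b" using Lin_PwD2[OF f r] by blast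
      then have fl: "at f a < at f b" using fab by simp
      have "b < a" using ne ba by (cases "a = b") auto
      then have "at g a < at g b" using precD2[OF p r'(2) r'(1) _ fl] by blast
      then show False using gab by simp
    qed
  qed
qed

lemma prec_pattern:
  assumes f: "f \<in> Lin (Pw v)" and p: "prec g f" and r: "i \<in> {1..length v}" "j \<in> {1..length v}"
  shows "at f i \<le> at f j \<longleftrightarrow> (at g i, at v i) \<le> (at g j, at v j)"
proof -
  have lf: "length f = length v" using Lin_PwD3[OF f] by simp
  have r': "i \<in> {1..length f}" "j \<in> {1..length f}" using r lf by auto
  show ?thesis
  proof
    assume fij: "at f i \<le> at f j"
    then have gij: "at g i \<le> at g j" by (rule precD1[OF p r'])
    show "(at g i, at v i) \<le> (at g j, at v j)"
    proof (cases "at g i < at g j")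
      case True then show ?thesis by simp
    next
      case False
      then have geq: "at g i = at g j" using gij by simp
      have "at v i \<le> at v j"
      proof (rule ccontr)
        assume "\<not> at v i \<le> at v j"
        then have vji: "at v j < at v i" by simp
        consider "i < j" | "j < i" | "i = j" by linarith
        then show False
        proof cases
          case 1
          then have "at f j \<le> at f i" using Lin_PwD1[OF f r(2) r(1)] vji by simp
          then have "at f i = at f j" using fij by simp
          then have "at v i = at v j" by (rule Lin_PwD2[OF f r])
          then show False using vji by simp
        next
          case 2
          have "at f i \<noteq> at f j" using Lin_PwD2[OF f r] vji by auto
          then have "at f i < at f j" using fij by simp
          then have "at g i < at g j" using precD2[OF p r'(2) r'(1) 2] by blast
          then show False using geq by simp
        next
          case 3 then show False using vji by simp
        qed
      qed
      then show ?thesis using geq by simp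
    qed
  next
    assume K: "(at g i, at v i) \<le> (at g j, at v j)"
    show "at f i \<le> at f j"
    proof (rule ccontr)
      assume "\<not> at f i \<le> at f j"
      then have fji: "at f j < at f i" by simp
      then have "at g j \<le> at g i" using precD1[OF p r'(2) r'(1)] by simp
      then have geq: "at g i = at g j" and vij: "at v i \<le> at v j" using K by auto
      consider "i < j" | "j < i" | "i = j" by linarith
      then show False
      proof cases
        case 1
        then have "at g j < at g i" using precD2[OF p r' 1 fji] by blast
        then show False using geq by simp
      next
        case 2
        then have "at f i \<le> at f j" using Lin_PwD1[OF f r] vij by simp
        then show False using fji by simp
      next
        case 3 then show False using fji by simp
      qed
    qed
  qed
qed

lemma prec_exists:
  assumes g: "g \<in> WLin (Pw v)"
  defines "f0 \<equiv> mkword (length v) (\<lambda>i. (at g i, at v i))"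
  shows "f0 \<in> Lin (Pw v) \<and> prec g f0"
proof -
  have pg: "packed g" "length g = length v" using WLin_PwD3[OF g] by auto
  have M: "at f0 i \<le> at f0 j \<longleftrightarrow> (at g i, at v i) \<le> (at g j, at v j)"
    if "i \<in> {1..length v}" "j \<in> {1..length v}" for i j
    unfolding f0_def by (rule mkword_mono_iff[OF that])
  have lf: "length f0 = length v" unfolding f0_def by simp
  have pf: "packed f0" unfolding f0_def by (rule mkword_packed)
  have "f0 \<in> Lin (Pw v)" unfolding Lin_Pw
  proof (intro conjI ballI impI)
    show "packed f0" "length f0 = length v" by fact+
    fix a b assume r: "a \<in> {1..length v}" "b \<in> {1..length v}" and ba: "b \<le> a"
      and va: "at v a \<le> at v b"
    have "at g a \<le> at g b" by (rule WLin_PwD1[OF g r ba va])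
    moreover have "at g a = at g b \<longrightarrow> at v a = at v b" using WLin_PwD2[OF g r ba va] by blast
    ultimately have "(at g a, at v a) \<le> (at g b, at v b)" by auto
    then show "at f0 a \<le> at f0 b" using M[OF r] by blast
  next
    fix a b assume r: "a \<in> {1..length v}" "b \<in> {1..length v}" and e: "at f0 a = at f0 b"
    then have "(at g a, at v a) \<le> (at g b, at v b)" "(at g b, at v b) \<le> (at g a, at v a)"
      using M[OF r] M[OF r(2,1)] by auto
    then show "at v a = at v b" by auto
  qed
  moreover have "prec g f0" unfolding prec_def
  proof (intro conjI ballI impI)
    show "packed g" "packed f0" "length g = length f0" using pg pf lf by auto
    fix i j assume r0: "i \<in> {1..length f0}" "j \<in> {1..length f0}"
    then have r: "i \<in> {1..length v}" "j \<in> {1..length v}" using lf by auto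
    {
      assume "at f0 i \<le> at f0 j"
      then have "(at g i, at v i) \<le> (at g j, at v j)" using M[OF r] by blast
      then show "at g i \<le> at g j" by auto
    }
    assume h: "i < j \<and> at f0 j < at f0 i"
    then have "\<not> (at g i, at v i) \<le> (at g j, at v j)" using M[OF r] by auto
    then have c: "at g j < at g i \<or> (at g j = at g i \<and> at v j < at v i)" by auto
    have ij: "i \<le> j" using h by simp
    show "at g j < at g i"
    proof (cases "at g j < at g i")
      case True then show ?thesis .
    next
      case False
      then have e: "at g j = at g i" and vl: "at v j < at v i" using c by auto
      have "at v j = at v i" using WLin_PwD2[OF g r(2) r(1) ij _ e] vl by simp
      then show ?thesis using vl by simp
    qed
  qed
  ultimately show ?thesis by simp
qed

lemma card_prec:
  "card {f \<in> Lin (Pw v). prec g f} = (if g \<in> WLin (Pw v) then 1 else 0)"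
proof (cases "g \<in> WLin (Pw v)")
  case True
  define f0 where "f0 = mkword (length v) (\<lambda>i. (at g i, at v i))"
  have f0: "f0 \<in> Lin (Pw v)" "prec g f0" using prec_exists[OF True] unfolding f0_def by auto
  have "{f \<in> Lin (Pw v). prec g f} = {f0}"
  proof (intro set_eqI iffI)
    fix f assume "f \<in> {f \<in> Lin (Pw v). prec g f}"
    then have fL: "f \<in> Lin (Pw v)" and fp: "prec g f" by auto
    have lf: "length f = length v" using Lin_PwD3[OF fL] by simp
    have lf0: "length f0 = length v" using Lin_PwD3[OF f0(1)] by simp
    have "f = f0"
    proof (rule pattern_eq)
      show "packed f" using Lin_PwD3[OF fL] by simp
      show "packed f0" using Lin_PwD3[OF f0(1)] by simp
      show "length f = length f0" using lf lf0 by simp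
      show "\<forall>i\<in>{1..length f}. \<forall>j\<in>{1..length f}. at f i \<le> at f j \<longleftrightarrow> at f0 i \<le> at f0 j"
      proof (intro ballI)
        fix i j assume "i \<in> {1..length f}" "j \<in> {1..length f}"
        then have r: "i \<in> {1..length v}" "j \<in> {1..length v}" using lf by auto
        show "at f i \<le> at f j \<longleftrightarrow> at f0 i \<le> at f0 j"
          unfolding prec_pattern[OF fL fp r] prec_pattern[OF f0 r] ..
      qed
    qed
    then show "f \<in> {f0}" by simp
  next
    fix f assume "f \<in> {f0}"
    then show "f \<in> {f \<in> Lin (Pw v). prec g f}" using f0 by simp
  qed
  then show ?thesis using True by simp
next
  case False
  have e: "{f \<in> Lin (Pw v). prec g f} = {}"
  proof (rule equals0I)
    fix f assume "f \<in> {f \<in> Lin (Pw v). prec g f}"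
    then have "f \<in> Lin (Pw v)" "prec g f" by simp_all
    then have "g \<in> WLin (Pw v)" by (rule prec_WLin)
    then show False using \<open>g \<notin> WLin (Pw v)\<close> by contradiction
  qed
  show ?thesis unfolding e using False by (simp only: card.empty if_False)
qed


lemma ind_T[simp]: "ind True = 1" and ind_F[simp]: "ind False = 0" by (simp_all add: ind_def)

lemma supp_ind: "supp (\<lambda>x. (ind (x \<in> A) :: 'k::field)) = A"
  unfolding supp_def ind_def by auto

lemma sum_ind:
  assumes "finite A"
  shows "(\<Sum>x\<in>A. (ind (P x) :: 'k::field)) = of_nat (card {x\<in>A. P x})"
proof -
  have "(\<Sum>x\<in>A. (ind (P x) :: 'k)) = (\<Sum>x\<in>A. if P x then 1 else 0)" unfolding ind_def ..
  also have "\<dots> = (\<Sum>x\<in>{x\<in>A. P x}. 1)" using assms by (rule sum.inter_filter[symmetric])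
  also have "\<dots> = of_nat (card {x\<in>A. P x})" by (simp only: sum_constant mult_1_right)
  finally show ?thesis .
qed

lemma lin_ext_sum:
  assumes "finite T" "supp a \<subseteq> T"
  shows "lin_ext M a y = (\<Sum>x\<in>T. a x * M x y)"
  unfolding lin_ext_def using assms by (intro sum.mono_neutral_left) (auto simp: supp_def)

lemma lin_ext_supp:
  assumes "finite (supp a)" "\<And>x. x \<in> supp a \<Longrightarrow> supp (M x) \<subseteq> Y"
  shows "supp (lin_ext M a) \<subseteq> Y"
proof
  fix y assume y: "y \<in> supp (lin_ext M a)"
  show "y \<in> Y"
  proof (rule ccontr)
    assume "y \<notin> Y"
    then have "\<forall>x\<in>supp a. M x y = 0" using assms(2) unfolding supp_def by blast
    then have "lin_ext M a y = 0" unfolding lin_ext_def by simp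
    then show False using y unfolding supp_def by simp
  qed
qed

lemma lin_ext_comp:
  assumes fa: "finite (supp a)" and fY: "\<And>x. x \<in> supp a \<Longrightarrow> finite (Y x)"
    and sY: "\<And>x. x \<in> supp a \<Longrightarrow> supp (M x) \<subseteq> Y x"
  shows "lin_ext N (lin_ext M a) z = (\<Sum>x\<in>supp a. a x * (\<Sum>y\<in>Y x. M x y * N y z))"
proof -
  define T where "T = (\<Union>x\<in>supp a. Y x)"
  have fT: "finite T" unfolding T_def using fa fY by auto
  have S: "supp (lin_ext M a) \<subseteq> T" using fa by (rule lin_ext_supp) (use sY in \<open>auto simp: T_def\<close>)
  have "lin_ext N (lin_ext M a) z = (\<Sum>y\<in>T. lin_ext M a y * N y z)" by (rule lin_ext_sum[OF fT S])
  also have "\<dots> = (\<Sum>y\<in>T. \<Sum>x\<in>supp a. a x * M x y * N y z)" unfolding lin_ext_def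
    by (simp add: sum_distrib_right)
  also have "\<dots> = (\<Sum>x\<in>supp a. \<Sum>y\<in>T. a x * M x y * N y z)" by (rule sum.swap)
  also have "\<dots> = (\<Sum>x\<in>supp a. a x * (\<Sum>y\<in>Y x. M x y * N y z))"
  proof (rule sum.cong[OF refl])
    fix x assume x: "x \<in> supp a"
    have "(\<Sum>y\<in>T. a x * M x y * N y z) = a x * (\<Sum>y\<in>T. M x y * N y z)"
      by (simp add: sum_distrib_left mult.assoc)
    also have "(\<Sum>y\<in>T. M x y * N y z) = (\<Sum>y\<in>Y x. M x y * N y z)"
    proof (rule sum.mono_neutral_right[OF fT])
      show "Y x \<subseteq> T" unfolding T_def using x by (rule UN_upper)
      show "\<forall>y\<in>T - Y x. M x y * N y z = 0"
      proof
        fix y assume "y \<in> T - Y x"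
        then have "y \<notin> supp (M x)" using sY[OF x] by blast
        then have "M x y = 0" unfolding supp_def by simp
        then show "M x y * N y z = 0" by simp
      qed
    qed
    finally show "(\<Sum>y\<in>T. a x * M x y * N y z) = a x * (\<Sum>y\<in>Y x. M x y * N y z)" .
  qed
  finally show ?thesis .
qed

lemma lin_ext_add:
  assumes "finite (supp a)" "finite (supp b)"
  shows "lin_ext M (\<lambda>x. a x + b x) y = lin_ext M a y + lin_ext M b y"
proof -
  define T where "T = supp a \<union> supp b"
  have fT: "finite T" using assms T_def by simp
  have s: "supp (\<lambda>x. a x + b x) \<subseteq> T"
  proof
    fix x assume "x \<in> supp (\<lambda>x. a x + b x)"
    then have "a x + b x \<noteq> 0" by (simp add: supp_def)
    then have "a x \<noteq> 0 \<or> b x \<noteq> 0" by auto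
    then show "x \<in> T" by (simp add: T_def supp_def)
  qed
  have sa: "supp a \<subseteq> T" and sb: "supp b \<subseteq> T" unfolding T_def by simp_all
  have "lin_ext M (\<lambda>x. a x + b x) y = (\<Sum>x\<in>T. (a x + b x) * M x y)" by (rule lin_ext_sum[OF fT s])
  also have "\<dots> = (\<Sum>x\<in>T. a x * M x y) + (\<Sum>x\<in>T. b x * M x y)"
    by (simp only: distrib_right sum.distrib)
  also have "\<dots> = lin_ext M a y + lin_ext M b y"
    by (simp only: lin_ext_sum[OF fT sa] lin_ext_sum[OF fT sb])
  finally show ?thesis .
qed

lemma lin_ext_diff:
  assumes "finite (supp a)" "finite (supp b)"
  shows "lin_ext M (\<lambda>x. a x - b x) y = lin_ext M a y - (lin_ext M b y :: 'k::comm_ring_1)"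
proof -
  define T where "T = supp a \<union> supp b"
  have fT: "finite T" using assms T_def by simp
  have s: "supp (\<lambda>x. a x - b x) \<subseteq> T"
  proof
    fix x assume "x \<in> supp (\<lambda>x. a x - b x)"
    then have "a x - b x \<noteq> 0" by (simp add: supp_def)
    then have "a x \<noteq> 0 \<or> b x \<noteq> 0" by auto
    then show "x \<in> T" by (simp add: T_def supp_def)
  qed
  have sa: "supp a \<subseteq> T" and sb: "supp b \<subseteq> T" unfolding T_def by simp_all
  have "lin_ext M (\<lambda>x. a x - b x) y = (\<Sum>x\<in>T. (a x - b x) * M x y)" by (rule lin_ext_sum[OF fT s])
  also have "\<dots> = (\<Sum>x\<in>T. a x * M x y) - (\<Sum>x\<in>T. b x * M x y)"
    by (simp only: left_diff_distrib sum_subtractf)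
  also have "\<dots> = lin_ext M a y - lin_ext M b y"
    by (simp only: lin_ext_sum[OF fT sa] lin_ext_sum[OF fT sb])
  finally show ?thesis .
qed

lemma lin_ext_smult:
  assumes "finite (supp a)"
  shows "lin_ext M (\<lambda>x. c * a x) y = c * lin_ext M a y"
proof -
  have s: "supp (\<lambda>x. c * a x) \<subseteq> supp a" unfolding supp_def by auto
  have "lin_ext M (\<lambda>x. c * a x) y = (\<Sum>x\<in>supp a. c * a x * M x y)" by (rule lin_ext_sum[OF assms s])
  also have "\<dots> = c * (\<Sum>x\<in>supp a. a x * M x y)" by (simp add: sum_distrib_left mult.assoc)
  also have "\<dots> = c * lin_ext M a y" unfolding lin_ext_def ..
  finally show ?thesis .
qed

lemma packed_set_bound: "packed f \<Longrightarrow> set f \<subseteq> {1..length f}"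
proof -
  assume "packed f"
  then obtain k where k: "set f = {1..k}" unfolding packed_def by auto
  have "card (set f) \<le> length f" by (rule card_length)
  then have "k \<le> length f" using k by simp
  then show ?thesis using k by auto
qed

lemma finite_packed_len: "finite {f. packed f \<and> length f = n}"
proof -
  have "{f. packed f \<and> length f = n} \<subseteq> {f. set f \<subseteq> {1..n} \<and> length f = n}"
    using packed_set_bound by auto
  moreover have "finite {f. set f \<subseteq> {1..n} \<and> length f = (n::nat)}"
    by (rule finite_lists_length_eq) simp
  ultimately show ?thesis by (rule finite_subset)
qed

lemma finite_WLin: "finite (WLin P)"
proof -
  have "WLin P \<subseteq> {f. packed f \<and> length f = fst P}"
  proof
    fix f assume "f \<in> WLin P"
    then have "packed f \<and> length f = fst P" unfolding WLin_alt by blast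
    then show "f \<in> {f. packed f \<and> length f = fst P}" by simp
  qed
  then show ?thesis using finite_packed_len by (rule finite_subset)
qed

lemma finite_Lin: "finite (Lin P)"
proof -
  have "Lin P \<subseteq> {f. packed f \<and> length f = fst P}"
  proof
    fix f assume "f \<in> Lin P"
    then have "packed f \<and> length f = fst P" unfolding Lin_alt by blast
    then show "f \<in> {f. packed f \<and> length f = fst P}" by simp
  qed
  then show ?thesis using finite_packed_len by (rule finite_subset)
qed

lemma WLin_PW: "WLin P \<subseteq> PW"
proof
  fix f assume "f \<in> WLin P"
  then have "packed f" unfolding WLin_alt by blast
  then show "f \<in> PW" unfolding PW_def by simp
qed

lemma supp_phi':
  assumes "finite (supp a)"
  shows "supp (phi' a :: nat list \<Rightarrow> 'k::field) \<subseteq> (\<Union>P\<in>supp a. WLin P)"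
  unfolding phi'_def by (rule lin_ext_supp[OF assms]) (auto simp: supp_ind)

lemma phi'_in:
  assumes "a \<in> freevec WPP"
  shows "(phi' a :: nat list \<Rightarrow> 'k::field) \<in> freevec PW"
proof -
  have fa: "finite (supp a)" using assms unfolding freevec_def by simp
  have s: "supp (phi' a :: nat list \<Rightarrow> 'k) \<subseteq> (\<Union>P\<in>supp a. WLin P)" by (rule supp_phi'[OF fa])
  have f: "finite (\<Union>P\<in>supp a. WLin P)" by (intro finite_UN_I fa finite_WLin)
  have u: "(\<Union>P\<in>supp a. WLin P) \<subseteq> PW" by (intro UN_least WLin_PW)
  have "finite (supp (phi' a :: nat list \<Rightarrow> 'k))" by (rule finite_subset[OF s f])
  moreover have "supp (phi' a :: nat list \<Rightarrow> 'k) \<subseteq> PW" by (rule subset_trans[OF s u])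
  ultimately show ?thesis unfolding freevec_def by simp
qed

lemma freevec_WPP_Pw:
  assumes "a \<in> freevec WPP" "P \<in> supp a"
  shows "\<exists>v\<in>PW. P = Pw v"
  using assms unfolding freevec_def WPP_Pw by auto

lemma part_psi:
  assumes a: "a \<in> freevec WPP"
  shows "phi' a = psi (phi (a :: wppdata \<Rightarrow> 'k::field))"
proof
  fix g
  have fa: "finite (supp a)" using a unfolding freevec_def by simp
  have "psi (phi a) g = (\<Sum>P\<in>supp a. a P * (\<Sum>f\<in>Lin P. ind (f \<in> Lin P) * (ind (prec g f) :: 'k)))"
    unfolding psi_def phi_def
    by (rule lin_ext_comp[OF fa]) (auto simp: finite_Lin supp_ind)
  also have "\<dots> = (\<Sum>P\<in>supp a. a P * ind (g \<in> WLin P))"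
  proof (rule sum.cong[OF refl])
    fix P assume P: "P \<in> supp a"
    obtain v where v: "P = Pw v" using freevec_WPP_Pw[OF a P] by auto
    have "(\<Sum>f\<in>Lin P. ind (f \<in> Lin P) * (ind (prec g f) :: 'k)) = (\<Sum>f\<in>Lin P. (ind (prec g f) :: 'k))"
      by (rule sum.cong) auto
    also have "\<dots> = of_nat (card {f\<in>Lin P. prec g f})" by (rule sum_ind[OF finite_Lin])
    also have "\<dots> = ind (g \<in> WLin P)" unfolding v card_prec by (simp add: ind_def)
    finally show "a P * (\<Sum>f\<in>Lin P. ind (f \<in> Lin P) * (ind (prec g f) :: 'k)) = a P * ind (g \<in> WLin P)"
      by simp
  qed
  also have "\<dots> = phi' a g" unfolding phi'_def lin_ext_def ..
  finally show "phi' a g = psi (phi a) g" by simp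
qed

lemma packed_Nil: "packed []" unfolding packed_def by (rule exI[of _ 0]) simp

lemma WLin_empty: "WLin empty_wpp = {[]}"
proof (intro set_eqI iffI)
  fix f assume "f \<in> WLin empty_wpp"
  then have "length f = fst empty_wpp" unfolding WLin_alt by blast
  then show "f \<in> {[]}" by (simp add: empty_wpp_def)
next
  fix f :: "nat list" assume "f \<in> {[]}"
  then have f: "f = []" by simp
  show "f \<in> WLin empty_wpp" unfolding f WLin_alt empty_wpp_def fst_conv
    using packed_Nil by simp
qed

lemma part_unit: "phi' (unitH :: wppdata \<Rightarrow> 'k::field) = unitW"
proof
  fix g
  have s: "supp (unitH :: wppdata \<Rightarrow> 'k) = {empty_wpp}" unfolding supp_def unitH_def ind_def by auto
  have "phi' (unitH :: wppdata \<Rightarrow> 'k) g = (\<Sum>P\<in>{empty_wpp}. unitH P * ind (g \<in> WLin P))"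
    unfolding phi'_def lin_ext_def s ..
  also have "\<dots> = ind (g = [])" by (simp add: unitH_def WLin_empty)
  finally show "phi' (unitH :: wppdata \<Rightarrow> 'k) g = unitW g" unfolding unitW_def .
qed

lemma nil_WLin_Pw: "[] \<in> WLin (Pw v) \<longleftrightarrow> Pw v = empty_wpp"
proof
  assume "[] \<in> WLin (Pw v)"
  then have "length v = 0" using WLin_PwD3 by fastforce
  then show "Pw v = empty_wpp" unfolding Pw_def empty_wpp_def by simp
next
  assume "Pw v = empty_wpp"
  then have "length v = 0" unfolding Pw_def empty_wpp_def by simp
  then show "[] \<in> WLin (Pw v)" unfolding WLin_Pw using packed_Nil by simp
qed

lemma part_counit:
  assumes a: "a \<in> freevec WPP"
  shows "counitW (phi' a) = counitH (a :: wppdata \<Rightarrow> 'k::field)"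
proof -
  have fa: "finite (supp a)" using a unfolding freevec_def by simp
  have "counitW (phi' a) = (\<Sum>P\<in>supp a. a P * ind ([] \<in> WLin P))"
    unfolding counitW_def phi'_def lin_ext_def ..
  also have "\<dots> = (\<Sum>P\<in>supp a. a P * ind (P = empty_wpp))"
  proof (rule sum.cong[OF refl])
    fix P assume P: "P \<in> supp a"
    obtain v where v: "P = Pw v" using freevec_WPP_Pw[OF a P] by auto
    show "a P * ind ([] \<in> WLin P) = a P * ind (P = empty_wpp)" unfolding v nil_WLin_Pw ..
  qed
  also have "\<dots> = a empty_wpp"
  proof (cases "empty_wpp \<in> supp a")
    case True
    have "(\<Sum>P\<in>supp a. a P * ind (P = empty_wpp)) = (\<Sum>P\<in>supp a. if P = empty_wpp then a P else 0)"
      by (rule sum.cong) (auto simp: ind_def)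
    also have "\<dots> = a empty_wpp" using True fa by (simp add: sum.delta)
    finally show ?thesis .
  next
    case False
    then have "\<forall>P\<in>supp a. a P * ind (P = empty_wpp) = 0" by (auto simp: ind_def)
    then have "(\<Sum>P\<in>supp a. a P * ind (P = empty_wpp)) = 0" by (rule sum.neutral)
    moreover have "a empty_wpp = 0" using False unfolding supp_def by simp
    ultimately show ?thesis by simp
  qed
  finally show ?thesis unfolding counitH_def .
qed


definition wd :: "wppdata \<Rightarrow> nat list" where
  "wd P = (SOME v. v \<in> PW \<and> P = Pw v)"

lemma wd:
  assumes "P \<in> WPP"
  shows "wd P \<in> PW \<and> P = Pw (wd P)"
proof -
  have "\<exists>v. v \<in> PW \<and> P = Pw v" using assms unfolding WPP_Pw by blast
  then show ?thesis unfolding wd_def by (rule someI_ex)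
qed

lemma phi'_apply: "phi' a g = (\<Sum>P\<in>supp a. a P * ind (g \<in> WLin P))"
  unfolding phi'_def lin_ext_def ..

lemma phi'_kernel:
  assumes c: "c \<in> freevec WPP" and z: "\<forall>g. phi' c g = (0::'k::field)"
  shows "c P = 0"
proof (rule ccontr)
  assume nz: "c P \<noteq> 0"
  define K where "K = supp c"
  have fK: "finite K" and KW: "K \<subseteq> WPP" using c unfolding freevec_def K_def by auto
  have PK: "P \<in> K" using nz unfolding K_def supp_def by simp
  define m where "m = Max ((\<lambda>Q. rnk (wd Q)) ` K)"
  have "m \<in> (\<lambda>Q. rnk (wd Q)) ` K" unfolding m_def using fK PK by (intro Max_in) auto
  then obtain P0 where P0: "P0 \<in> K" "rnk (wd P0) = m" by auto
  have mx: "rnk (wd Q) \<le> m" if "Q \<in> K" for Q unfolding m_def using fK that by (intro Max_ge) auto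
  define g where "g = wd P0"
  have gP0: "g \<in> PW" "P0 = Pw g" using wd[of P0] P0 KW unfolding g_def by auto
  have others: "c Q * ind (g \<in> WLin Q) = 0" if Q: "Q \<in> K - {P0}" for Q
  proof -
    have QW: "wd Q \<in> PW" "Q = Pw (wd Q)" using wd[of Q] Q KW by auto
    have "g \<notin> WLin Q"
    proof
      assume gQ: "g \<in> WLin Q"
      have ne: "g \<noteq> wd Q"
      proof
        assume "g = wd Q"
        then have "P0 = Q" using gP0 QW by simp
        then show False using Q by simp
      qed
      have "rnk g < rnk (wd Q)" using TRI[OF QW(1)] gQ ne QW(2) by metis
      moreover have "rnk (wd Q) \<le> rnk g" using mx[of Q] Q P0 unfolding g_def by simp
      ultimately show False by simp
    qed
    then show ?thesis by simp
  qed
  have "phi' c g = (\<Sum>Q\<in>K. c Q * ind (g \<in> WLin Q))" unfolding phi'_apply K_def ..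
  also have "\<dots> = c P0 * ind (g \<in> WLin P0) + (\<Sum>Q\<in>K - {P0}. c Q * ind (g \<in> WLin Q))"
    using fK P0(1) by (rule sum.remove)
  also have "(\<Sum>Q\<in>K - {P0}. c Q * ind (g \<in> WLin Q)) = 0"
    by (rule sum.neutral) (use others in blast)
  finally have ph: "phi' c g = c P0 * ind (g \<in> WLin P0)" by simp
  have "g \<in> WLin P0" using diag[OF gP0(1)] gP0(2) by simp
  then have "phi' c g = c P0" using ph by simp
  moreover have "c P0 \<noteq> 0" using P0(1) unfolding K_def supp_def by simp
  ultimately show False using z by simp
qed

lemma freevec_diff:
  assumes "a \<in> freevec A" "b \<in> freevec A"
  shows "(\<lambda>x. a x - b x :: 'k::comm_ring_1) \<in> freevec A"
proof -
  have s: "supp (\<lambda>x. a x - b x) \<subseteq> supp a \<union> supp b" unfolding supp_def by auto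
  have "finite (supp a \<union> supp b)" "supp a \<union> supp b \<subseteq> A" using assms unfolding freevec_def by auto
  then show ?thesis unfolding freevec_def using s by (auto intro: finite_subset)
qed

lemma phi'_inj: "inj_on (phi' :: (wppdata \<Rightarrow> 'k::field) \<Rightarrow> _) (freevec WPP)"
proof (rule inj_onI)
  fix a b :: "wppdata \<Rightarrow> 'k" assume a: "a \<in> freevec WPP" and b: "b \<in> freevec WPP" and e: "phi' a = phi' b"
  have fa: "finite (supp a)" and fb: "finite (supp b)" using a b unfolding freevec_def by auto
  have c: "(\<lambda>x. a x - b x) \<in> freevec WPP" by (rule freevec_diff[OF a b])
  have "\<forall>g. phi' (\<lambda>x. a x - b x) g = (0::'k)"
  proof
    fix g
    have "phi' (\<lambda>x. a x - b x) g = phi' a g - phi' b g" unfolding phi'_def by (rule lin_ext_diff[OF fa fb])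
    then show "phi' (\<lambda>x. a x - b x) g = 0" using e by simp
  qed
  then have "\<forall>P. a P - b P = 0" using phi'_kernel[OF c] by blast
  then show "a = b" by (simp add: fun_eq_iff)
qed

definition delta :: "'a \<Rightarrow> 'a \<Rightarrow> 'k::field" where
  "delta h = (\<lambda>x. ind (x = h))"

lemma supp_delta: "supp (delta h :: 'a \<Rightarrow> 'k::field) = {h}"
  unfolding supp_def delta_def ind_def by auto

lemma delta_freevec: "h \<in> A \<Longrightarrow> (delta h :: 'a \<Rightarrow> 'k::field) \<in> freevec A"
  by (simp add: freevec_def supp_delta)

lemma phi'_delta: "phi' (delta P :: wppdata \<Rightarrow> 'k::field) = (\<lambda>g. ind (g \<in> WLin P))"
proof
  fix g
  show "phi' (delta P :: wppdata \<Rightarrow> 'k) g = ind (g \<in> WLin P)"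
    unfolding phi'_apply supp_delta by (simp add: delta_def)
qed

definition Im :: "(nat list \<Rightarrow> 'k::field) set" where
  "Im = phi' ` freevec WPP"

lemma Im_add:
  assumes "x \<in> Im" "y \<in> Im" shows "(\<lambda>z. x z + y z) \<in> (Im :: (nat list \<Rightarrow> 'k::field) set)"
proof -
  obtain a b where a: "a \<in> freevec WPP" "x = phi' a" and b: "b \<in> freevec WPP" "y = phi' b"
    using assms unfolding Im_def by auto
  have fa: "finite (supp a)" and fb: "finite (supp b)" using a b unfolding freevec_def by auto
  have s: "supp (\<lambda>P. a P + b P) \<subseteq> supp a \<union> supp b" unfolding supp_def by auto
  have "finite (supp a \<union> supp b)" "supp a \<union> supp b \<subseteq> WPP" using a b unfolding freevec_def by auto
  then have ab: "(\<lambda>P. a P + b P) \<in> freevec WPP" unfolding freevec_def using s by (auto intro: finite_subset)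
  have "phi' (\<lambda>P. a P + b P) = (\<lambda>z. x z + y z)"
  proof
    fix z show "phi' (\<lambda>P. a P + b P) z = x z + y z" unfolding a(2) b(2) phi'_def by (rule lin_ext_add[OF fa fb])
  qed
  then show ?thesis unfolding Im_def by (rule image_eqI[OF sym ab])
qed

lemma Im_smult:
  assumes "x \<in> Im" shows "(\<lambda>z. c * x z) \<in> (Im :: (nat list \<Rightarrow> 'k::field) set)"
proof -
  obtain a where a: "a \<in> freevec WPP" "x = phi' a" using assms unfolding Im_def by auto
  have fa: "finite (supp a)" using a unfolding freevec_def by auto
  have s: "supp (\<lambda>P. c * a P) \<subseteq> supp a" unfolding supp_def by auto
  have ca: "(\<lambda>P. c * a P) \<in> freevec WPP" using a s unfolding freevec_def by (auto intro: finite_subset)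
  have "phi' (\<lambda>P. c * a P) = (\<lambda>z. c * x z)"
  proof
    fix z show "phi' (\<lambda>P. c * a P) z = c * x z" unfolding a(2) phi'_def by (rule lin_ext_smult[OF fa])
  qed
  then show ?thesis unfolding Im_def by (rule image_eqI[OF sym ca])
qed

lemma Im_zero: "(\<lambda>z. 0) \<in> (Im :: (nat list \<Rightarrow> 'k::field) set)"
proof -
  have z: "(\<lambda>P. 0 :: 'k) \<in> freevec WPP" unfolding freevec_def supp_def by simp
  have "phi' (\<lambda>P. 0 :: 'k) = (\<lambda>z. 0)" unfolding phi'_apply supp_def by simp
  then show ?thesis unfolding Im_def by (rule image_eqI[OF sym z])
qed

lemma Im_sum:
  assumes "finite H" "\<And>h. h \<in> H \<Longrightarrow> f h \<in> Im"
  shows "(\<lambda>z. \<Sum>h\<in>H. f h z) \<in> (Im :: (nat list \<Rightarrow> 'k::field) set)"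
  using assms
proof (induction H rule: finite_induct)
  case empty then show ?case using Im_zero by simp
next
  case (insert h H)
  have "(\<lambda>z. f h z + (\<Sum>h\<in>H. f h z)) \<in> (Im :: (nat list \<Rightarrow> 'k) set)"
    using insert by (intro Im_add) auto
  then show ?case using insert by simp
qed

lemma delta_Im:
  assumes "g \<in> PW" shows "(delta g :: nat list \<Rightarrow> 'k::field) \<in> Im"
  using assms
proof (induction "rnk g" arbitrary: g rule: less_induct)
  case less
  define P where "P = Pw g"
  define H where "H = WLin P - {g}"
  have fH: "finite H" unfolding H_def using finite_WLin by simp
  have IH: "(delta h :: nat list \<Rightarrow> 'k) \<in> Im" if "h \<in> H" for h
  proof -
    have h: "h \<in> WLin (Pw g)" "h \<noteq> g" using that unfolding H_def P_def by auto
    have "h \<in> PW" using h WLin_PW by blast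
    moreover have "rnk h < rnk g" by (rule TRI[OF less.prems h])
    ultimately show ?thesis using less.hyps by blast
  qed
  have PW: "P \<in> WPP" unfolding P_def WPP_Pw using less.prems by simp
  have A: "(\<lambda>z. ind (z \<in> WLin P) :: 'k) \<in> Im"
    unfolding Im_def phi'_delta[symmetric] using delta_freevec[OF PW] by (rule imageI)
  have B: "(\<lambda>z. (-1) * (\<Sum>h\<in>H. (delta h :: nat list \<Rightarrow> 'k) z)) \<in> Im"
    by (intro Im_smult Im_sum[OF fH] IH)
  have "(\<lambda>z. ind (z \<in> WLin P) + (-1) * (\<Sum>h\<in>H. (delta h :: nat list \<Rightarrow> 'k) z)) \<in> Im"
    by (rule Im_add[OF A B])
  moreover have "(\<lambda>z. ind (z \<in> WLin P) + (-1) * (\<Sum>h\<in>H. (delta h :: nat list \<Rightarrow> 'k) z)) = delta g"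
  proof
    fix z
    have gP: "g \<in> WLin P" unfolding P_def using diag[OF less.prems] .
    have s: "(\<Sum>h\<in>H. (delta h :: nat list \<Rightarrow> 'k) z) = (if z \<in> H then 1 else 0)"
      unfolding delta_def ind_def using fH by (simp add: sum.delta)
    show "ind (z \<in> WLin P) + (-1) * (\<Sum>h\<in>H. (delta h :: nat list \<Rightarrow> 'k) z) = delta g z"
      unfolding s unfolding delta_def ind_def H_def using gP by auto
  qed
  ultimately show ?case by simp
qed

lemma phi'_surj:
  assumes b: "b \<in> freevec PW"
  shows "b \<in> (Im :: (nat list \<Rightarrow> 'k::field) set)"
proof -
  have fb: "finite (supp b)" and sb: "supp b \<subseteq> PW" using b unfolding freevec_def by auto
  have "(\<lambda>z. \<Sum>g\<in>supp b. (\<lambda>g z. b g * delta g z) g z) \<in> (Im :: (nat list \<Rightarrow> 'k) set)"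
  proof (rule Im_sum[OF fb])
    fix g assume "g \<in> supp b"
    then have "(delta g :: nat list \<Rightarrow> 'k) \<in> Im" using sb delta_Im by blast
    then show "(\<lambda>z. b g * delta g z) \<in> Im" by (rule Im_smult)
  qed
  moreover have "(\<lambda>z. \<Sum>g\<in>supp b. (\<lambda>g z. b g * delta g z) g z) = b"
  proof
    fix z
    have "(\<Sum>g\<in>supp b. b g * delta g z) = (\<Sum>g\<in>supp b. if z = g then b g else 0)"
      by (rule sum.cong) (auto simp: delta_def ind_def)
    also have "\<dots> = b z" using fb by (simp add: sum.delta supp_def)
    finally show "(\<Sum>g\<in>supp b. (\<lambda>g z. b g * delta g z) g z) = b z" by simp
  qed
  ultimately show ?thesis by simp
qed

lemma part_bij: "bij_betw (phi' :: (wppdata \<Rightarrow> 'k::field) \<Rightarrow> (nat list \<Rightarrow> 'k)) (freevec WPP) (freevec PW)"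
proof -
  have "phi' ` freevec WPP = (freevec PW :: (nat list \<Rightarrow> 'k) set)"
  proof
    show "phi' ` freevec WPP \<subseteq> (freevec PW :: (nat list \<Rightarrow> 'k) set)" using phi'_in by blast
    show "(freevec PW :: (nat list \<Rightarrow> 'k) set) \<subseteq> phi' ` freevec WPP"
      using phi'_surj unfolding Im_def by blast
  qed
  then show ?thesis using phi'_inj unfolding bij_betw_def by blast
qed


lemma WLin_tup: "f \<in> WLin (n, R1, R2) \<longleftrightarrow> packed f \<and> length f = n
   \<and> (\<forall>i\<in>{1..n}. \<forall>j\<in>{1..n}. (i, j) \<in> R1 \<longrightarrow> at f i \<le> at f j)
   \<and> (\<forall>i\<in>{1..n}. \<forall>j\<in>{1..n}. (i, j) \<in> R1 \<and> at f i = at f j \<longrightarrow> qeq (n, R1, R2) i j)"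
  unfolding WLin_alt by simp

lemma shift_mem: "(a, b) \<in> shift_rel k S \<longleftrightarrow> k \<le> a \<and> k \<le> b \<and> (a - k, b - k) \<in> S"
  unfolding shift_rel_def by force

lemma at_take: "i \<in> {1..n} \<Longrightarrow> n \<le> length g \<Longrightarrow> at (take n g) i = at g i"
  unfolding at_def by (intro nth_take) auto

lemma at_drop: "1 \<le> i \<Longrightarrow> n \<le> length g \<Longrightarrow> at (drop n g) i = at g (i + n)"
proof -
  assume a: "1 \<le> i" "n \<le> length g"
  have e: "i + n - 1 = n + (i - 1)" using a(1) by simp
  show ?thesis unfolding at_def e by (rule nth_drop[OF a(2)])
qed

lemma wpp_rels:
  assumes "(n, R1, R2) \<in> WPP"
  shows "R1 \<subseteq> {1..n} \<times> {1..n}" "R2 \<subseteq> {1..n} \<times> {1..n}"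
proof -
  have "is_wpp (n, R1, R2)" using assms by (simp add: WPP_def)
  then have "partial_order_on_set {1..n} R1 \<and> partial_order_on_set {1..n} R2"
    unfolding is_wpp_def prod.case by blast
  then show "R1 \<subseteq> {1..n} \<times> {1..n}" "R2 \<subseteq> {1..n} \<times> {1..n}"
    unfolding partial_order_on_set_def by blast+
qed

lemma wpp_prod_tup: "wpp_prod (n, R1, R2) (m, S1, S2) =
  (n + m, R1 \<union> shift_rel n S1, R2 \<union> shift_rel n S2 \<union> {(i, j). i \<in> {1..n} \<and> j \<in> {n+1..n+m}})"
  unfolding wpp_prod_def by simp

lemma qle_prod1:
  assumes P: "(n, R1, R2) \<in> WPP" and Q: "(m, S1, S2) \<in> WPP" and r: "i \<in> {1..n}" "j \<in> {1..n}"
  shows "qle (wpp_prod (n, R1, R2) (m, S1, S2)) i j \<longleftrightarrow> qle (n, R1, R2) i j"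
proof -
  have S: "S1 \<subseteq> {1..m} \<times> {1..m}" "S2 \<subseteq> {1..m} \<times> {1..m}" using wpp_rels[OF Q] by auto
  have n1: "(i, j) \<notin> shift_rel n S1" "(i, j) \<notin> shift_rel n S2" using S r unfolding shift_mem by auto
  have n2: "(i, j) \<notin> {(i, j). i \<in> {1..n} \<and> j \<in> {n+1..n+m}}" using r by auto
  show ?thesis unfolding wpp_prod_tup qle_def using n1 n2 by auto
qed

lemma qle_prod2:
  assumes P: "(n, R1, R2) \<in> WPP" and Q: "(m, S1, S2) \<in> WPP" and r: "1 \<le> i" "1 \<le> j"
  shows "qle (wpp_prod (n, R1, R2) (m, S1, S2)) (i + n) (j + n) \<longleftrightarrow> qle (m, S1, S2) i j"
proof -
  have R: "R1 \<subseteq> {1..n} \<times> {1..n}" "R2 \<subseteq> {1..n} \<times> {1..n}" using wpp_rels[OF P] by auto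
  have n1: "(i + n, j + n) \<notin> R1" "(i + n, j + n) \<notin> R2" using R r by auto
  have n2: "(i + n, j + n) \<notin> {(i, j). i \<in> {1..n} \<and> j \<in> {n+1..n+m}}" using r by auto
  have s: "(i + n, j + n) \<in> shift_rel n S \<longleftrightarrow> (i, j) \<in> S" for S unfolding shift_mem by simp
  show ?thesis unfolding wpp_prod_tup qle_def using n1 n2 s by auto
qed

lemma qeq_prod1:
  assumes "(n, R1, R2) \<in> WPP" "(m, S1, S2) \<in> WPP" "i \<in> {1..n}" "j \<in> {1..n}"
  shows "qeq (wpp_prod (n, R1, R2) (m, S1, S2)) i j \<longleftrightarrow> qeq (n, R1, R2) i j"
  unfolding qeq_def using qle_prod1[OF assms] qle_prod1[OF assms(1,2,4,3)] by simp

lemma qeq_prod2: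
  assumes "(n, R1, R2) \<in> WPP" "(m, S1, S2) \<in> WPP" "1 \<le> i" "1 \<le> j"
  shows "qeq (wpp_prod (n, R1, R2) (m, S1, S2)) (i + n) (j + n) \<longleftrightarrow> qeq (m, S1, S2) i j"
  unfolding qeq_def using qle_prod2[OF assms] qle_prod2[OF assms(1,2,4,3)] by simp

lemma PROD:
  assumes P: "(n, R1, R2) \<in> WPP" and Q: "(m, S1, S2) \<in> WPP"
  shows "g \<in> WLin (wpp_prod (n, R1, R2) (m, S1, S2)) \<longleftrightarrow>
    packed g \<and> length g = n + m \<and> pack (take n g) \<in> WLin (n, R1, R2) \<and> pack (drop n g) \<in> WLin (m, S1, S2)"
    (is "?L \<longleftrightarrow> ?R")
proof -
  have R: "R1 \<subseteq> {1..n} \<times> {1..n}" using wpp_rels[OF P] by auto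
  have S: "S1 \<subseteq> {1..m} \<times> {1..m}" using wpp_rels[OF Q] by auto
  define PQ where "PQ = wpp_prod (n, R1, R2) (m, S1, S2)"
  have PQt: "PQ = (n + m, R1 \<union> shift_rel n S1, R2 \<union> shift_rel n S2 \<union> {(i, j). i \<in> {1..n} \<and> j \<in> {n+1..n+m}})"
    unfolding PQ_def wpp_prod_tup ..
  note WPQ = WLin_tup[of _ "n+m" "R1 \<union> shift_rel n S1"
    "R2 \<union> shift_rel n S2 \<union> {(i, j). i \<in> {1..n} \<and> j \<in> {n+1..n+m}}", folded PQt]
  show ?thesis unfolding PQ_def[symmetric]
  proof
    assume L: "g \<in> WLin PQ"
    have pg: "packed g" and lg: "length g = n + m"
      and L1: "\<forall>i\<in>{1..n+m}. \<forall>j\<in>{1..n+m}. (i, j) \<in> R1 \<union> shift_rel n S1 \<longrightarrow> at g i \<le> at g j"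
      and L2: "\<forall>i\<in>{1..n+m}. \<forall>j\<in>{1..n+m}. (i, j) \<in> R1 \<union> shift_rel n S1 \<and> at g i = at g j \<longrightarrow> qeq PQ i j"
      using L unfolding WPQ by blast+
    define u where "u = take n g"
    define w where "w = drop n g"
    have lu: "length u = n" and lw: "length w = m" using lg unfolding u_def w_def by auto
    have atu: "at u i = at g i" if "i \<in> {1..n}" for i unfolding u_def using that lg by (intro at_take) auto
    have atw: "at w i = at g (i + n)" if "1 \<le> i" for i unfolding w_def using that lg by (intro at_drop) auto
    have "pack u \<in> WLin (n, R1, R2)" unfolding WLin_tup
    proof (intro conjI ballI impI)
      show "packed (pack u)" by (rule packed_pack)
      show "length (pack u) = n" using lu by simp
      fix i j assume r: "i \<in> {1..n}" "j \<in> {1..n}"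
      have r': "i \<in> {1..length u}" "j \<in> {1..length u}" using r lu by auto
      have r'': "i \<in> {1..n+m}" "j \<in> {1..n+m}" using r by auto
      {
        assume ij: "(i, j) \<in> R1"
        then have "at g i \<le> at g j" using L1 r'' by blast
        then show "at (pack u) i \<le> at (pack u) j" unfolding pack_mono_iff[OF r'] atu[OF r(1)] atu[OF r(2)] .
      }
      assume h: "(i, j) \<in> R1 \<and> at (pack u) i = at (pack u) j"
      then have "at g i = at g j" unfolding pack_eq_iff[OF r'] atu[OF r(1)] atu[OF r(2)] by simp
      then have "qeq PQ i j" using L2 r'' h by blast
      then show "qeq (n, R1, R2) i j" unfolding PQ_def using qeq_prod1[OF P Q r] by simp
    qed
    moreover have "pack w \<in> WLin (m, S1, S2)" unfolding WLin_tup
    proof (intro conjI ballI impI)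
      show "packed (pack w)" by (rule packed_pack)
      show "length (pack w) = m" using lw by simp
      fix i j assume r: "i \<in> {1..m}" "j \<in> {1..m}"
      have r': "i \<in> {1..length w}" "j \<in> {1..length w}" using r lw by auto
      have r'': "i + n \<in> {1..n+m}" "j + n \<in> {1..n+m}" using r by auto
      have sh: "(i + n, j + n) \<in> shift_rel n S1 \<longleftrightarrow> (i, j) \<in> S1" unfolding shift_mem by simp
      have ai: "at w i = at g (i + n)" "at w j = at g (j + n)" using r atw by auto
      {
        assume ij: "(i, j) \<in> S1"
        then have "at g (i + n) \<le> at g (j + n)" using L1 r'' sh by blast
        then show "at (pack w) i \<le> at (pack w) j" unfolding pack_mono_iff[OF r'] ai .
      }
      assume h: "(i, j) \<in> S1 \<and> at (pack w) i = at (pack w) j"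
      then have "at g (i + n) = at g (j + n)" unfolding pack_eq_iff[OF r'] ai by simp
      then have "qeq PQ (i + n) (j + n)" using L2 r'' h sh by blast
      then show "qeq (m, S1, S2) i j" unfolding PQ_def using qeq_prod2[OF P Q] r by simp
    qed
    ultimately show "packed g \<and> length g = n + m \<and> pack (take n g) \<in> WLin (n, R1, R2) \<and> pack (drop n g) \<in> WLin (m, S1, S2)"
      using pg lg unfolding u_def w_def by simp
  next
    assume Rh: "packed g \<and> length g = n + m \<and> pack (take n g) \<in> WLin (n, R1, R2) \<and> pack (drop n g) \<in> WLin (m, S1, S2)"
    define u where "u = take n g"
    define w where "w = drop n g"
    have pg: "packed g" and lg: "length g = n + m" and U: "pack u \<in> WLin (n, R1, R2)"
      and W: "pack w \<in> WLin (m, S1, S2)" using Rh unfolding u_def w_def by auto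
    have lu: "length u = n" and lw: "length w = m" using lg unfolding u_def w_def by auto
    have atu: "at u i = at g i" if "i \<in> {1..n}" for i unfolding u_def using that lg by (intro at_take) auto
    have atw: "at w i = at g (i + n)" if "1 \<le> i" for i unfolding w_def using that lg by (intro at_drop) auto
    have U1: "\<forall>i\<in>{1..n}. \<forall>j\<in>{1..n}. (i, j) \<in> R1 \<longrightarrow> at (pack u) i \<le> at (pack u) j"
      and U2: "\<forall>i\<in>{1..n}. \<forall>j\<in>{1..n}. (i, j) \<in> R1 \<and> at (pack u) i = at (pack u) j \<longrightarrow> qeq (n, R1, R2) i j"
      using U unfolding WLin_tup by blast+
    have W1: "\<forall>i\<in>{1..m}. \<forall>j\<in>{1..m}. (i, j) \<in> S1 \<longrightarrow> at (pack w) i \<le> at (pack w) j"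
      and W2: "\<forall>i\<in>{1..m}. \<forall>j\<in>{1..m}. (i, j) \<in> S1 \<and> at (pack w) i = at (pack w) j \<longrightarrow> qeq (m, S1, S2) i j"
      using W unfolding WLin_tup by blast+
    have key: "at g i \<le> at g j \<and> (at g i = at g j \<longrightarrow> qeq PQ i j)"
      if r: "i \<in> {1..n+m}" "j \<in> {1..n+m}" and ij: "(i, j) \<in> R1 \<union> shift_rel n S1" for i j
    proof -
      from ij consider (a) "(i, j) \<in> R1" | (b) "(i, j) \<in> shift_rel n S1" by blast
      then show "at g i \<le> at g j \<and> (at g i = at g j \<longrightarrow> qeq PQ i j)"
      proof cases
        case a
        then have rr: "i \<in> {1..n}" "j \<in> {1..n}" using R by auto
        have r': "i \<in> {1..length u}" "j \<in> {1..length u}" using rr lu by auto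
        have "at (pack u) i \<le> at (pack u) j" using U1 rr a by blast
        then have le: "at g i \<le> at g j" unfolding pack_mono_iff[OF r'] atu[OF rr(1)] atu[OF rr(2)] .
        have "at g i = at g j \<longrightarrow> qeq PQ i j"
        proof
          assume "at g i = at g j"
          then have "at (pack u) i = at (pack u) j" unfolding pack_eq_iff[OF r'] atu[OF rr(1)] atu[OF rr(2)] .
          then have "qeq (n, R1, R2) i j" using U2 rr a by blast
          then show "qeq PQ i j" unfolding PQ_def using qeq_prod1[OF P Q rr] by simp
        qed
        then show ?thesis using le by simp
      next
        case b
        then have nb: "n \<le> i" "n \<le> j" "(i - n, j - n) \<in> S1" unfolding shift_mem by auto
        define i' where "i' = i - n"
        define j' where "j' = j - n"
        have ii: "i = i' + n" "j = j' + n" using nb unfolding i'_def j'_def by auto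
        have s1: "(i', j') \<in> S1" using nb unfolding i'_def j'_def by simp
        have rr: "i' \<in> {1..m}" "j' \<in> {1..m}" using S s1 by auto
        have r': "i' \<in> {1..length w}" "j' \<in> {1..length w}" using rr lw by auto
        have ai: "at w i' = at g i" "at w j' = at g j" using rr atw ii by auto
        have "at (pack w) i' \<le> at (pack w) j'" using W1 rr s1 by blast
        then have le: "at g i \<le> at g j" unfolding pack_mono_iff[OF r'] ai .
        have "at g i = at g j \<longrightarrow> qeq PQ i j"
        proof
          assume "at g i = at g j"
          then have "at (pack w) i' = at (pack w) j'" unfolding pack_eq_iff[OF r'] ai .
          then have "qeq (m, S1, S2) i' j'" using W2 rr s1 by blast
          then show "qeq PQ i j" unfolding PQ_def ii using qeq_prod2[OF P Q] rr by simp
        qed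
        then show ?thesis using le by simp
      qed
    qed
    show "g \<in> WLin PQ" unfolding WPQ
    proof (intro conjI ballI impI)
      show "packed g" "length g = n + m" by fact+
      fix i j assume r: "i \<in> {1..n+m}" "j \<in> {1..n+m}"
      {
        assume "(i, j) \<in> R1 \<union> shift_rel n S1"
        then show "at g i \<le> at g j" using key[OF r] by blast
      }
      assume "(i, j) \<in> R1 \<union> shift_rel n S1 \<and> at g i = at g j"
      then show "qeq PQ i j" using key[OF r] by blast
    qed
  qed
qed


lemma bilin_ext_sum:
  assumes fA: "finite A" and fB: "finite B" and sa: "supp a \<subseteq> A" and sb: "supp b \<subseteq> B"
  shows "bilin_ext M a b z = (\<Sum>x\<in>A. \<Sum>y\<in>B. a x * b y * M x y z)"
proof -
  have "bilin_ext M a b z = (\<Sum>x\<in>supp a. \<Sum>y\<in>supp b. a x * b y * M x y z)" unfolding bilin_ext_def ..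
  also have "\<dots> = (\<Sum>x\<in>supp a. \<Sum>y\<in>B. a x * b y * M x y z)"
  proof (rule sum.cong[OF refl])
    fix x
    show "(\<Sum>y\<in>supp b. a x * b y * M x y z) = (\<Sum>y\<in>B. a x * b y * M x y z)"
    proof (rule sum.mono_neutral_left[OF fB sb])
      show "\<forall>y\<in>B - supp b. a x * b y * M x y z = 0" unfolding supp_def by simp
    qed
  qed
  also have "\<dots> = (\<Sum>x\<in>A. \<Sum>y\<in>B. a x * b y * M x y z)"
  proof (rule sum.mono_neutral_left[OF fA sa])
    show "\<forall>x\<in>A - supp a. (\<Sum>y\<in>B. a x * b y * M x y z) = 0" unfolding supp_def by simp
  qed
  finally show ?thesis .
qed

lemma sum_ind_eq:
  assumes "finite T"
  shows "(\<Sum>r\<in>T. ind (r = x) * f r) = ind (x \<in> T) * (f x :: 'k::field)"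
proof -
  have "(\<Sum>r\<in>T. ind (r = x) * f r) = (\<Sum>r\<in>T. if r = x then f r else 0)"
    by (rule sum.cong[OF refl]) (simp add: ind_def)
  also have "\<dots> = (if x \<in> T then f x else 0)" using assms by (rule sum.delta)
  also have "\<dots> = ind (x \<in> T) * f x" by (simp add: ind_def)
  finally show ?thesis .
qed

lemma sum_restrict_ind:
  assumes "finite U" "A \<subseteq> U"
  shows "(\<Sum>x\<in>U. ind (x \<in> A) * f x) = (\<Sum>x\<in>A. f x :: 'k::field)"
proof -
  have "(\<Sum>x\<in>U. ind (x \<in> A) * f x) = (\<Sum>x\<in>U. if x \<in> A then f x else 0)"
    by (rule sum.cong[OF refl]) (simp add: ind_def)
  also have "\<dots> = sum f (U \<inter> A)" using assms(1) by (rule sum.inter_restrict[symmetric])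
  also have "U \<inter> A = A" using assms(2) by blast
  finally show ?thesis .
qed

lemma expand1:
  "(\<Sum>r\<in>T. (\<Sum>p\<in>C. \<Sum>q\<in>D. f p q r) * h r) = (\<Sum>p\<in>C. \<Sum>q\<in>D. \<Sum>r\<in>T. f p q r * (h r :: 'k::field))"
proof -
  have "(\<Sum>r\<in>T. (\<Sum>p\<in>C. \<Sum>q\<in>D. f p q r) * h r) = (\<Sum>r\<in>T. \<Sum>p\<in>C. \<Sum>q\<in>D. f p q r * h r)"
    by (simp only: sum_distrib_right)
  also have "\<dots> = (\<Sum>p\<in>C. \<Sum>r\<in>T. \<Sum>q\<in>D. f p q r * h r)" by (rule sum.swap)
  also have "\<dots> = (\<Sum>p\<in>C. \<Sum>q\<in>D. \<Sum>r\<in>T. f p q r * h r)"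
    by (rule sum.cong[OF refl]) (rule sum.swap)
  finally show ?thesis .
qed

lemma expand2:
  "(\<Sum>x\<in>A. \<Sum>y\<in>B. (\<Sum>p\<in>C. f p x) * (\<Sum>q\<in>D. g q y) * h x y)
   = (\<Sum>p\<in>C. \<Sum>q\<in>D. \<Sum>x\<in>A. \<Sum>y\<in>B. f p x * g q y * (h x y :: 'k::field))"
proof -
  have e: "(\<Sum>p\<in>C. f p x) * (\<Sum>q\<in>D. g q y) * h x y = (\<Sum>p\<in>C. \<Sum>q\<in>D. f p x * g q y * h x y)" for x y
    by (simp add: sum_distrib_left sum_distrib_right mult.assoc) (rule sum.swap)
  have "(\<Sum>x\<in>A. \<Sum>y\<in>B. (\<Sum>p\<in>C. f p x) * (\<Sum>q\<in>D. g q y) * h x y)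
      = (\<Sum>x\<in>A. \<Sum>y\<in>B. \<Sum>p\<in>C. \<Sum>q\<in>D. f p x * g q y * h x y)" by (simp only: e)
  also have "\<dots> = (\<Sum>x\<in>A. \<Sum>p\<in>C. \<Sum>y\<in>B. \<Sum>q\<in>D. f p x * g q y * h x y)"
    by (rule sum.cong[OF refl]) (rule sum.swap)
  also have "\<dots> = (\<Sum>p\<in>C. \<Sum>x\<in>A. \<Sum>y\<in>B. \<Sum>q\<in>D. f p x * g q y * h x y)" by (rule sum.swap)
  also have "\<dots> = (\<Sum>p\<in>C. \<Sum>x\<in>A. \<Sum>q\<in>D. \<Sum>y\<in>B. f p x * g q y * h x y)"
    by (rule sum.cong[OF refl], rule sum.cong[OF refl]) (rule sum.swap)
  also have "\<dots> = (\<Sum>p\<in>C. \<Sum>q\<in>D. \<Sum>x\<in>A. \<Sum>y\<in>B. f p x * g q y * h x y)"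
    by (rule sum.cong[OF refl]) (rule sum.swap)
  finally show ?thesis .
qed

definition Cind :: "nat list \<Rightarrow> nat list \<Rightarrow> nat list \<Rightarrow> 'k::field" where
  "Cind u v w = ind (packed w \<and> length w = length u + length v
       \<and> pack (take (length u) w) = u \<and> pack (drop (length u) w) = v)"

lemma prod_count:
  assumes P: "P \<in> WPP" and Q: "Q \<in> WPP"
  shows "(\<Sum>u\<in>WLin P. \<Sum>w\<in>WLin Q. (Cind u w g :: 'k::field)) = ind (g \<in> WLin (wpp_prod P Q))"
proof -
  obtain n R1 R2 where Pt: "P = (n, R1, R2)" by (cases P) auto
  obtain m S1 S2 where Qt: "Q = (m, S1, S2)" by (cases Q) auto
  define C0 where "C0 = (packed g \<and> length g = n + m)"
  define u0 where "u0 = pack (take n g)"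
  define w0 where "w0 = pack (drop n g)"
  have lu: "length u = n" if "u \<in> WLin P" for u using that unfolding Pt WLin_tup by blast
  have lw: "length w = m" if "w \<in> WLin Q" for w using that unfolding Qt WLin_tup by blast
  have "(\<Sum>u\<in>WLin P. \<Sum>w\<in>WLin Q. (Cind u w g :: 'k))
      = (\<Sum>u\<in>WLin P. ind (u = u0) * (\<Sum>w\<in>WLin Q. ind (w = w0) * (ind C0 :: 'k)))"
  proof (rule sum.cong[OF refl])
    fix u assume u: "u \<in> WLin P"
    have "(\<Sum>w\<in>WLin Q. (Cind u w g :: 'k)) = (\<Sum>w\<in>WLin Q. ind (u = u0) * (ind (w = w0) * ind C0))"
    proof (rule sum.cong[OF refl])
      fix w assume w: "w \<in> WLin Q"
      show "(Cind u w g :: 'k) = ind (u = u0) * (ind (w = w0) * ind C0)"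
        unfolding Cind_def lu[OF u] lw[OF w] C0_def u0_def w0_def ind_def by auto
    qed
    also have "\<dots> = ind (u = u0) * (\<Sum>w\<in>WLin Q. ind (w = w0) * ind C0)"
      by (simp only: sum_distrib_left)
    finally show "(\<Sum>w\<in>WLin Q. (Cind u w g :: 'k)) = ind (u = u0) * (\<Sum>w\<in>WLin Q. ind (w = w0) * (ind C0 :: 'k))" .
  qed
  also have "\<dots> = ind (u0 \<in> WLin P) * (ind (w0 \<in> WLin Q) * (ind C0 :: 'k))"
    unfolding sum_ind_eq[OF finite_WLin] ..
  also have "\<dots> = ind (g \<in> WLin (wpp_prod P Q))"
    unfolding Pt Qt PROD[OF P[unfolded Pt] Q[unfolded Qt]] C0_def u0_def w0_def ind_def by auto
  finally show ?thesis .
qed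

lemma part_prod:
  assumes a: "a \<in> freevec WPP" and b: "b \<in> freevec WPP"
  shows "phi' (prodH a b) = prodW (phi' a) (phi' (b :: wppdata \<Rightarrow> 'k::field))"
proof
  fix g
  define SA where "SA = supp a"
  define SB where "SB = supp b"
  have fA: "finite SA" and fB: "finite SB" and SAW: "SA \<subseteq> WPP" and SBW: "SB \<subseteq> WPP"
    using a b unfolding freevec_def SA_def SB_def by auto
  define T where "T = (\<lambda>(P, Q). wpp_prod P Q) ` (SA \<times> SB)"
  have fT: "finite T" unfolding T_def using fA fB by simp
  have pH: "prodH a b R = (\<Sum>P\<in>SA. \<Sum>Q\<in>SB. a P * b Q * ind (R = wpp_prod P Q))" for R
    unfolding prodH_def bilin_ext_def SA_def SB_def ..
  have sT: "supp (prodH a b) \<subseteq> T"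
  proof
    fix R assume R: "R \<in> supp (prodH a b)"
    show "R \<in> T"
    proof (rule ccontr)
      assume nT: "R \<notin> T"
      have "\<forall>P\<in>SA. \<forall>Q\<in>SB. R \<noteq> wpp_prod P Q" using nT unfolding T_def by force
      then have "prodH a b R = 0" unfolding pH by (simp add: ind_def)
      then show False using R unfolding supp_def by simp
    qed
  qed
  have "phi' (prodH a b) g = (\<Sum>R\<in>T. prodH a b R * ind (g \<in> WLin R))"
    unfolding phi'_def by (rule lin_ext_sum[OF fT sT])
  also have "\<dots> = (\<Sum>R\<in>T. (\<Sum>P\<in>SA. \<Sum>Q\<in>SB. a P * b Q * ind (R = wpp_prod P Q)) * ind (g \<in> WLin R))"
    unfolding pH ..
  also have "\<dots> = (\<Sum>P\<in>SA. \<Sum>Q\<in>SB. \<Sum>R\<in>T. a P * b Q * ind (R = wpp_prod P Q) * ind (g \<in> WLin R))"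
    by (rule expand1)
  also have "\<dots> = (\<Sum>P\<in>SA. \<Sum>Q\<in>SB. a P * b Q * ind (g \<in> WLin (wpp_prod P Q)))"
  proof (intro sum.cong[OF refl])
    fix P Q assume P: "P \<in> SA" and Q: "Q \<in> SB"
    have inT: "wpp_prod P Q \<in> T" unfolding T_def using P Q by force
    have "(\<Sum>R\<in>T. a P * b Q * ind (R = wpp_prod P Q) * ind (g \<in> WLin R))
        = a P * b Q * (\<Sum>R\<in>T. ind (R = wpp_prod P Q) * ind (g \<in> WLin R))"
      by (simp only: sum_distrib_left mult.assoc)
    also have "\<dots> = a P * b Q * ind (g \<in> WLin (wpp_prod P Q))"
      unfolding sum_ind_eq[OF fT] using inT by simp
    finally show "(\<Sum>R\<in>T. a P * b Q * ind (R = wpp_prod P Q) * ind (g \<in> WLin R))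
        = a P * b Q * ind (g \<in> WLin (wpp_prod P Q))" .
  qed
  finally have LHS: "phi' (prodH a b) g = (\<Sum>P\<in>SA. \<Sum>Q\<in>SB. a P * b Q * ind (g \<in> WLin (wpp_prod P Q)))" .
  define UA where "UA = (\<Union>P\<in>SA. WLin P)"
  define UB where "UB = (\<Union>P\<in>SB. WLin P)"
  have fUA: "finite UA" unfolding UA_def by (intro finite_UN_I fA finite_WLin)
  have fUB: "finite UB" unfolding UB_def by (intro finite_UN_I fB finite_WLin)
  have fsa: "finite (supp a)" using fA unfolding SA_def .
  have fsb: "finite (supp b)" using fB unfolding SB_def .
  have sUA: "supp (phi' a :: nat list \<Rightarrow> 'k) \<subseteq> UA" unfolding UA_def SA_def by (rule supp_phi'[OF fsa])
  have sUB: "supp (phi' b :: nat list \<Rightarrow> 'k) \<subseteq> UB" unfolding UB_def SB_def by (rule supp_phi'[OF fsb])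
  have pa: "phi' a u = (\<Sum>P\<in>SA. a P * ind (u \<in> WLin P))" for u unfolding phi'_apply SA_def ..
  have pb: "phi' b w = (\<Sum>Q\<in>SB. b Q * ind (w \<in> WLin Q))" for w unfolding phi'_apply SB_def ..
  have "prodW (phi' a) (phi' b) g = (\<Sum>u\<in>UA. \<Sum>w\<in>UB. phi' a u * phi' b w * (Cind u w g :: 'k))"
    unfolding prodW_def Cind_def by (rule bilin_ext_sum[OF fUA fUB sUA sUB])
  also have "\<dots> = (\<Sum>u\<in>UA. \<Sum>w\<in>UB. (\<Sum>P\<in>SA. a P * ind (u \<in> WLin P)) * (\<Sum>Q\<in>SB. b Q * ind (w \<in> WLin Q)) * (Cind u w g :: 'k))"
    unfolding pa pb ..
  also have "\<dots> = (\<Sum>P\<in>SA. \<Sum>Q\<in>SB. \<Sum>u\<in>UA. \<Sum>w\<in>UB. a P * ind (u \<in> WLin P) * (b Q * ind (w \<in> WLin Q)) * (Cind u w g :: 'k))"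
    by (rule expand2)
  also have "\<dots> = (\<Sum>P\<in>SA. \<Sum>Q\<in>SB. a P * b Q * ind (g \<in> WLin (wpp_prod P Q)))"
  proof (intro sum.cong[OF refl])
    fix P Q assume P: "P \<in> SA" and Q: "Q \<in> SB"
    have WA: "WLin P \<subseteq> UA" unfolding UA_def using P by blast
    have WB: "WLin Q \<subseteq> UB" unfolding UB_def using Q by blast
    have "(\<Sum>u\<in>UA. \<Sum>w\<in>UB. a P * ind (u \<in> WLin P) * (b Q * ind (w \<in> WLin Q)) * (Cind u w g :: 'k))
       = a P * b Q * (\<Sum>u\<in>UA. ind (u \<in> WLin P) * (\<Sum>w\<in>UB. ind (w \<in> WLin Q) * Cind u w g))"
      by (simp add: sum_distrib_left mult_ac)
    also have "\<dots> = a P * b Q * (\<Sum>u\<in>WLin P. \<Sum>w\<in>WLin Q. (Cind u w g :: 'k))"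
      unfolding sum_restrict_ind[OF fUB WB] sum_restrict_ind[OF fUA WA] ..
    also have "\<dots> = a P * b Q * ind (g \<in> WLin (wpp_prod P Q))"
      using prod_count SAW SBW P Q by (metis subsetD)
    finally show "(\<Sum>u\<in>UA. \<Sum>w\<in>UB. a P * ind (u \<in> WLin P) * (b Q * ind (w \<in> WLin Q)) * (Cind u w g :: 'k))
       = a P * b Q * ind (g \<in> WLin (wpp_prod P Q))" .
  qed
  finally show "phi' (prodH a b) g = prodW (phi' a) (phi' b) g" using LHS by simp
qed


lemma rk_rkc: "rk S = rkc S" unfolding rk_def rkc_def by (rule ext) simp

lemma rk_bij: "finite S \<Longrightarrow> bij_betw (rk S) S {1..card S}"
  unfolding rk_rkc by (rule rkc_bij)

lemma rk_range: "finite S \<Longrightarrow> i \<in> S \<Longrightarrow> rk S i \<in> {1..card S}"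
  unfolding rk_rkc by (rule rkc_range)

lemma rk_inj: "finite S \<Longrightarrow> i \<in> S \<Longrightarrow> j \<in> S \<Longrightarrow> rk S i = rk S j \<longleftrightarrow> i = j"
  unfolding rk_rkc by (rule rkc_eq_iff)

lemma rk_surj: "finite S \<Longrightarrow> p \<in> {1..card S} \<Longrightarrow> \<exists>i\<in>S. rk S i = p"
  using rk_bij[of S] unfolding bij_betw_def by (metis imageE)

lemma at_append1: "p \<in> {1..length xs} \<Longrightarrow> at (xs @ ys) p = at xs p"
proof -
  assume p: "p \<in> {1..length xs}"
  then have "p - 1 < length xs" by auto
  then show ?thesis unfolding at_def by (simp add: nth_append)
qed

lemma at_append2: "at (xs @ [x]) (length xs + 1) = x"
  unfolding at_def by simp

lemma filter_at:
  "length (filter Q g) = card {i\<in>{1..length g}. Q (at g i)}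
   \<and> (\<forall>i\<in>{i\<in>{1..length g}. Q (at g i)}. at (filter Q g) (rk {i\<in>{1..length g}. Q (at g i)} i) = at g i)"
proof (induction g rule: rev_induct)
  case Nil
  then show ?case by simp
next
  case (snoc x xs)
  define n where "n = length xs"
  define S' where "S' = {i\<in>{1..length xs}. Q (at xs i)}"
  define S where "S = {i\<in>{1..length (xs @ [x])}. Q (at (xs @ [x]) i)}"
  have IH1: "length (filter Q xs) = card S'" and IH2: "\<forall>i\<in>S'. at (filter Q xs) (rk S' i) = at xs i"
    using snoc.IH unfolding S'_def by auto
  have fS': "finite S'" unfolding S'_def by simp
  have S'n: "S' \<subseteq> {1..n}" unfolding S'_def n_def by auto
  have atx: "at (xs @ [x]) i = at xs i" if "i \<in> {1..n}" for i using that unfolding n_def by (rule at_append1)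
  have atn: "at (xs @ [x]) (n + 1) = x" unfolding n_def by (rule at_append2)
  have Sdec: "S = S' \<union> (if Q x then {n + 1} else {})"
  proof (intro set_eqI iffI)
    fix i assume "i \<in> S"
    then have i: "i \<in> {1..n+1}" "Q (at (xs @ [x]) i)" unfolding S_def n_def by auto
    show "i \<in> S' \<union> (if Q x then {n + 1} else {})"
    proof (cases "i = n + 1")
      case True then show ?thesis using i atn by simp
    next
      case False
      then have "i \<in> {1..n}" using i by auto
      then show ?thesis using i atx unfolding S'_def n_def by auto
    qed
  next
    fix i assume i: "i \<in> S' \<union> (if Q x then {n + 1} else {})"
    show "i \<in> S"
    proof (cases "i \<in> S'")
      case True
      then have "i \<in> {1..n}" "Q (at xs i)" unfolding S'_def n_def by auto
      then show ?thesis unfolding S_def n_def using atx[of i] by (auto simp: n_def)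
    next
      case False
      then have "Q x" "i = n + 1" using i by (auto split: if_splits)
      then show ?thesis unfolding S_def using atn by (simp add: n_def)
    qed
  qed
  show ?case
  proof (cases "Q x")
    case False
    then have SS: "S = S'" using Sdec by simp
    have f: "filter Q (xs @ [x]) = filter Q xs" using False by simp
    show ?thesis unfolding S_def[symmetric] SS f
    proof (intro conjI ballI)
      show "length (filter Q xs) = card S'" by (rule IH1)
      fix i assume i: "i \<in> S'"
      then have "i \<in> {1..n}" using S'n by auto
      then show "at (filter Q xs) (rk S' i) = at (xs @ [x]) i" using IH2 i atx by simp
    qed
  next
    case True
    then have SS: "S = insert (n + 1) S'" using Sdec by simp
    have nS: "n + 1 \<notin> S'" using S'n by auto
    have cS: "card S = card S' + 1" unfolding SS using fS' nS by simp
    have f: "filter Q (xs @ [x]) = filter Q xs @ [x]" using True by simp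
    have rkS: "rk S i = rk S' i" if "i \<in> S'" for i
    proof -
      have "i \<le> n" using that S'n by auto
      then have "{y\<in>S. y \<le> i} = {y\<in>S'. y \<le> i}" unfolding SS by auto
      then show ?thesis unfolding rk_def by simp
    qed
    have rkn: "rk S (n + 1) = card S' + 1"
    proof -
      have "{y\<in>S. y \<le> n + 1} = S" unfolding SS using S'n by auto
      then show ?thesis unfolding rk_def using cS by simp
    qed
    show ?thesis unfolding S_def[symmetric] f
    proof (intro conjI ballI)
      show "length (filter Q xs @ [x]) = card S" using IH1 cS by simp
      fix i assume i: "i \<in> S"
      show "at (filter Q xs @ [x]) (rk S i) = at (xs @ [x]) i"
      proof (cases "i = n + 1")
        case True
        have "at (filter Q xs @ [x]) (rk S i) = at (filter Q xs @ [x]) (length (filter Q xs) + 1)"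
          unfolding True rkn IH1 ..
        also have "\<dots> = x" by (rule at_append2)
        finally show ?thesis using True atn by simp
      next
        case False
        then have iS': "i \<in> S'" using i SS by simp
        have p: "rk S' i \<in> {1..length (filter Q xs)}" using rk_range[OF fS' iS'] IH1 by simp
        have "at (filter Q xs @ [x]) (rk S i) = at (filter Q xs) (rk S' i)"
          unfolding rkS[OF iS'] by (rule at_append1[OF p])
        also have "\<dots> = at xs i" using IH2 iS' by simp
        also have "\<dots> = at (xs @ [x]) i" using iS' S'n atx by auto
        finally show ?thesis .
      qed
    qed
  qed
qed

lemma list_eq_rk:
  assumes "finite S" "length L1 = card S" "length L2 = card S"
    and "\<forall>i\<in>S. at L1 (rk S i) = at L2 (rk S i)"
  shows "L1 = L2"
proof (rule nth_equalityI)
  show "length L1 = length L2" using assms by simp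
  fix p assume p: "p < length L1"
  have "Suc p \<in> {1..card S}" using p assms(2) by simp
  then obtain i where i: "i \<in> S" "rk S i = Suc p" using rk_surj[OF assms(1)] by blast
  have "at L1 (rk S i) = at L2 (rk S i)" by (rule bspec[OF assms(4) i(1)])
  then show "L1 ! p = L2 ! p" unfolding i(2) at_def by simp
qed

lemma pack_shift:
  assumes "set w = {k+1..k+K}"
  shows "pack w = map (\<lambda>x. x - k) w"
proof (rule nth_equalityI)
  show "length (pack w) = length (map (\<lambda>x. x - k) w)" by simp
  fix p assume "p < length (pack w)"
  then have p: "p < length w" by simp
  have wp: "w ! p \<in> {k+1..k+K}" using p assms nth_mem by blast
  have "{y \<in> set w. y \<le> w ! p} = {k+1..w ! p}" unfolding assms using wp by auto
  then have "card {y \<in> set w. y \<le> w ! p} = w ! p - k" using wp by simp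
  then show "pack w ! p = map (\<lambda>x. x - k) w ! p" unfolding pack_def using p by simp
qed

lemma maxl_interval: "set w = {1..K} \<Longrightarrow> maxl w = K"
proof -
  assume s: "set w = {1..K}"
  have "insert 0 (set w) = {0..K}" unfolding s by auto
  moreover have "Max {0..K} = K" by (rule Max_eqI) auto
  ultimately show "maxl w = K" unfolding maxl_def by simp
qed


definition img :: "nat set \<Rightarrow> (nat \<times> nat) set \<Rightarrow> (nat \<times> nat) set" where
  "img S R = {(rk S i, rk S j) | i j. (i, j) \<in> R \<and> i \<in> S \<and> j \<in> S}"

lemma restr_tup: "restr (n, R1, R2) S = (card S, img S R1, img S R2)"
  unfolding restr_def img_def by simp

lemma mem_img:
  assumes "finite S" "i \<in> S" "j \<in> S"
  shows "(rk S i, rk S j) \<in> img S R \<longleftrightarrow> (i, j) \<in> R"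
proof
  assume "(rk S i, rk S j) \<in> img S R"
  then obtain i' j' where h: "rk S i = rk S i'" "rk S j = rk S j'" "(i', j') \<in> R" "i' \<in> S" "j' \<in> S"
    unfolding img_def by blast
  have "i' = i" using h(1,4) rk_inj[OF assms(1) assms(2)] by simp
  moreover have "j' = j" using h(2,5) rk_inj[OF assms(1) assms(3)] by simp
  ultimately show "(i, j) \<in> R" using h(3) by simp
next
  assume "(i, j) \<in> R"
  then show "(rk S i, rk S j) \<in> img S R" unfolding img_def using assms by blast
qed

lemma img_memD:
  assumes "(p, q) \<in> img S R"
  shows "\<exists>i j. i \<in> S \<and> j \<in> S \<and> (i, j) \<in> R \<and> p = rk S i \<and> q = rk S j"
  using assms unfolding img_def by blast

lemma qeq_restr:
  assumes "finite S" "i \<in> S" "j \<in> S"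
  shows "qeq (restr (n, R1, R2) S) (rk S i) (rk S j) \<longleftrightarrow> qeq (n, R1, R2) i j"
  unfolding qeq_def qle_def restr_tup prod.case
  using mem_img[OF assms] mem_img[OF assms(1,3,2)] by simp

lemma WLin_restr:
  assumes S: "S \<subseteq> {1..n}"
  shows "f \<in> WLin (restr (n, R1, R2) S) \<longleftrightarrow> packed f \<and> length f = card S \<and>
    (\<forall>i\<in>S. \<forall>j\<in>S. (i, j) \<in> R1 \<longrightarrow> at f (rk S i) \<le> at f (rk S j)
        \<and> (at f (rk S i) = at f (rk S j) \<longrightarrow> qeq (n, R1, R2) i j))"
    (is "?L \<longleftrightarrow> ?R")
proof -
  have fS: "finite S" using S finite_subset by blast
  have rr: "rk S i \<in> {1..card S}" if "i \<in> S" for i using rk_range[OF fS that] .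
  note W = WLin_tup[of f "card S" "img S R1" "img S R2", folded restr_tup[of n R1 R2 S]]
  show ?thesis
  proof
    assume L: ?L
    have pf: "packed f" "length f = card S"
      and L1: "\<forall>p\<in>{1..card S}. \<forall>q\<in>{1..card S}. (p, q) \<in> img S R1 \<longrightarrow> at f p \<le> at f q"
      and L2: "\<forall>p\<in>{1..card S}. \<forall>q\<in>{1..card S}. (p, q) \<in> img S R1 \<and> at f p = at f q \<longrightarrow> qeq (restr (n, R1, R2) S) p q"
      using L unfolding W by blast+
    show ?R
    proof (intro conjI ballI impI)
      show "packed f" "length f = card S" by fact+
      fix i j assume ij: "i \<in> S" "j \<in> S" and r: "(i, j) \<in> R1"
      have m: "(rk S i, rk S j) \<in> img S R1" using mem_img[OF fS ij] r by simp
      show "at f (rk S i) \<le> at f (rk S j)" using L1 rr[OF ij(1)] rr[OF ij(2)] m by blast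
      assume "at f (rk S i) = at f (rk S j)"
      then have "qeq (restr (n, R1, R2) S) (rk S i) (rk S j)" using L2 rr[OF ij(1)] rr[OF ij(2)] m by blast
      then show "qeq (n, R1, R2) i j" using qeq_restr[OF fS ij] by simp
    qed
  next
    assume R: ?R
    have pf: "packed f" "length f = card S"
      and R1h: "\<forall>i\<in>S. \<forall>j\<in>S. (i, j) \<in> R1 \<longrightarrow> at f (rk S i) \<le> at f (rk S j)
        \<and> (at f (rk S i) = at f (rk S j) \<longrightarrow> qeq (n, R1, R2) i j)"
      using R by blast+
    have key: "at f p \<le> at f q \<and> (at f p = at f q \<longrightarrow> qeq (restr (n, R1, R2) S) p q)"
      if m: "(p, q) \<in> img S R1" for p q
    proof -
      obtain i j where ij: "i \<in> S" "j \<in> S" "(i, j) \<in> R1" "p = rk S i" "q = rk S j"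
        using img_memD[OF m] by blast
      have h: "at f (rk S i) \<le> at f (rk S j) \<and> (at f (rk S i) = at f (rk S j) \<longrightarrow> qeq (n, R1, R2) i j)"
        using R1h ij(1,2,3) by blast
      then show ?thesis unfolding ij(4,5) using qeq_restr[OF fS ij(1,2)] by simp
    qed
    show ?L unfolding W
    proof (intro conjI ballI impI)
      show "packed f" "length f = card S" by fact+
      fix p q assume "p \<in> {1..card S}" "q \<in> {1..card S}"
      {
        assume "(p, q) \<in> img S R1"
        then show "at f p \<le> at f q" using key by blast
      }
      assume "(p, q) \<in> img S R1 \<and> at f p = at f q"
      then show "qeq (restr (n, R1, R2) S) p q" using key by blast
    qed
  qed
qed


definition Aset :: "wppdata \<Rightarrow> nat list \<Rightarrow> nat list \<Rightarrow> (nat list \<times> nat) set" where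
  "Aset P u v = {(g, k). g \<in> WLin P \<and> k \<in> {0..maxl g} \<and> u = filter (\<lambda>x. x \<le> k) g
      \<and> v = pack (filter (\<lambda>x. k < x) g)}"

definition Bset :: "wppdata \<Rightarrow> nat list \<Rightarrow> nat list \<Rightarrow> nat set set" where
  "Bset P u v = {U. upclosed1 P U \<and> u \<in> WLin (restr P ({1..fst P} - U)) \<and> v \<in> WLin (restr P U)}"

definition Fm :: "nat \<Rightarrow> nat list \<Rightarrow> nat \<Rightarrow> nat set" where
  "Fm n g k = {i \<in> {1..n}. k < at g i}"

definition recon :: "nat \<Rightarrow> nat list \<Rightarrow> nat list \<Rightarrow> nat set \<Rightarrow> nat list" where
  "recon n u v U = map (\<lambda>i. if i \<in> U then at v (rk U i) + maxl u else at u (rk ({1..n} - U) i)) [1..<n+1]"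

lemma list_eq_at:
  assumes "length L1 = length L2" "\<forall>i\<in>{1..length L1}. at L1 i = at L2 i"
  shows "L1 = L2"
proof (rule nth_equalityI)
  show "length L1 = length L2" by fact
  fix p assume "p < length L1"
  then have "Suc p \<in> {1..length L1}" by simp
  then have "at L1 (Suc p) = at L2 (Suc p)" using assms(2) by blast
  then show "L1 ! p = L2 ! p" unfolding at_def by simp
qed

lemma at_map: "p \<in> {1..length w} \<Longrightarrow> at (map h w) p = h (at w p)"
  unfolding at_def by auto

lemma recon_length: "length (recon n u v U) = n" unfolding recon_def by simp

lemma recon_at: "i \<in> {1..n} \<Longrightarrow> at (recon n u v U) i =
   (if i \<in> U then at v (rk U i) + maxl u else at u (rk ({1..n} - U) i))"
  unfolding recon_def by (rule at_map_upt)

lemma filter_at_le: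
  "length (filter (\<lambda>x. x \<le> k) g) = card {i\<in>{1..length g}. at g i \<le> k}
   \<and> (\<forall>i\<in>{i\<in>{1..length g}. at g i \<le> k}. at (filter (\<lambda>x. x \<le> k) g) (rk {i\<in>{1..length g}. at g i \<le> k} i) = at g i)"
  using filter_at[of "\<lambda>x. x \<le> k" g] by simp

lemma filter_at_gt:
  "length (filter (\<lambda>x. k < x) g) = card {i\<in>{1..length g}. k < at g i}
   \<and> (\<forall>i\<in>{i\<in>{1..length g}. k < at g i}. at (filter (\<lambda>x. k < x) g) (rk {i\<in>{1..length g}. k < at g i} i) = at g i)"
  using filter_at[of "\<lambda>x. k < x" g] by simp

lemma A_recon:
  assumes P: "(n, R1, R2) \<in> WPP" and gk: "(g, k) \<in> Aset (n, R1, R2) u v"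
  shows "k = maxl u \<and> g = recon n u v (Fm n g k) \<and> Fm n g k \<in> Bset (n, R1, R2) u v"
proof -
  have gW: "g \<in> WLin (n, R1, R2)" and kr: "k \<le> maxl g" and ue: "u = filter (\<lambda>x. x \<le> k) g"
    and ve: "v = pack (filter (\<lambda>x. k < x) g)" using gk unfolding Aset_def by auto
  have pg: "packed g" and lg: "length g = n"
    and G1: "\<forall>i\<in>{1..n}. \<forall>j\<in>{1..n}. (i, j) \<in> R1 \<longrightarrow> at g i \<le> at g j"
    and G2: "\<forall>i\<in>{1..n}. \<forall>j\<in>{1..n}. (i, j) \<in> R1 \<and> at g i = at g j \<longrightarrow> qeq (n, R1, R2) i j"
    using gW unfolding WLin_tup by blast+
  have R1s: "R1 \<subseteq> {1..n} \<times> {1..n}" using wpp_rels[OF P] by blast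
  obtain K where K: "set g = {1..K}" using pg unfolding packed_def by blast
  have mK: "maxl g = K" by (rule maxl_interval[OF K])
  have kK: "k \<le> K" using kr mK by simp
  define U where "U = Fm n g k"
  define S where "S = {1..n} - U"
  have Ue: "U = {i\<in>{1..length g}. k < at g i}" unfolding U_def Fm_def lg ..
  have Se: "S = {i\<in>{1..length g}. at g i \<le> k}" unfolding S_def U_def Fm_def lg by auto
  have fS: "finite S" and fU: "finite U" unfolding S_def U_def Fm_def by auto
  have SU: "S \<subseteq> {1..n}" "U \<subseteq> {1..n}" unfolding S_def U_def Fm_def by auto
  have lu: "length u = card S" and au: "\<forall>i\<in>S. at u (rk S i) = at g i"
    using filter_at_le[of k g] unfolding ue[symmetric] Se[symmetric] by blast+
  define fg where "fg = filter (\<lambda>x. k < x) g"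
  have lfg: "length fg = card U" and afg: "\<forall>i\<in>U. at fg (rk U i) = at g i"
    using filter_at_gt[of k g] unfolding fg_def[symmetric] Ue[symmetric] by blast+
  have su: "set u = {1..k}" unfolding ue using K kK by auto
  have mu: "maxl u = k" by (rule maxl_interval[OF su])
  have pu: "packed u" unfolding packed_def using su by blast
  have sfg: "set fg = {k+1..k+(K-k)}" unfolding fg_def using K kK by auto
  have vm: "v = map (\<lambda>x. x - k) fg" unfolding ve fg_def[symmetric] by (rule pack_shift[OF sfg])
  have lv: "length v = card U" unfolding vm using lfg by simp
  have av: "at v (rk U i) = at g i - k" if "i \<in> U" for i
  proof -
    have "rk U i \<in> {1..length fg}" using rk_range[OF fU that] lfg by simp
    then have "at v (rk U i) = at fg (rk U i) - k" unfolding vm by (rule at_map)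
    then show ?thesis using afg that by simp
  qed
  have gU: "k < at g i" if "i \<in> U" for i using that unfolding U_def Fm_def by simp
  have gS: "at g i \<le> k" if "i \<in> S" for i using that Se by simp
  have rec: "g = recon n u v U"
  proof (rule list_eq_at)
    show "length g = length (recon n u v U)" using lg recon_length by simp
    show "\<forall>i\<in>{1..length g}. at g i = at (recon n u v U) i"
    proof
      fix i assume i: "i \<in> {1..length g}"
      then have i': "i \<in> {1..n}" using lg by simp
      show "at g i = at (recon n u v U) i"
      proof (cases "i \<in> U")
        case True
        then show ?thesis unfolding recon_at[OF i'] mu using av[OF True] gU[OF True] by simp
      next
        case False
        then have "i \<in> S" unfolding S_def using i' by simp
        then show ?thesis unfolding recon_at[OF i'] S_def[symmetric] using False au by simp
      qed
    qed
  qed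
  have up: "upclosed1 (n, R1, R2) U" unfolding upclosed1_def prod.case
  proof (intro conjI allI impI)
    show "U \<subseteq> {1..n}" by (rule SU(2))
    fix i j assume h: "(i, j) \<in> R1 \<and> i \<in> U"
    then have ij: "i \<in> {1..n}" "j \<in> {1..n}" using R1s by auto
    have "at g i \<le> at g j" using G1 ij h by blast
    then have "k < at g j" using gU h by fastforce
    then show "j \<in> U" unfolding U_def Fm_def using ij by simp
  qed
  have uW: "u \<in> WLin (restr (n, R1, R2) S)" unfolding WLin_restr[OF SU(1)]
  proof (intro conjI ballI impI)
    show "packed u" "length u = card S" by fact+
    fix i j assume ij: "i \<in> S" "j \<in> S" and r: "(i, j) \<in> R1"
    have ij': "i \<in> {1..n}" "j \<in> {1..n}" using ij SU by auto
    show "at u (rk S i) \<le> at u (rk S j)" using au ij G1 ij' r by simp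
    assume "at u (rk S i) = at u (rk S j)"
    then have "at g i = at g j" using au ij by simp
    then show "qeq (n, R1, R2) i j" using G2 ij' r by blast
  qed
  have vW: "v \<in> WLin (restr (n, R1, R2) U)" unfolding WLin_restr[OF SU(2)]
  proof (intro conjI ballI impI)
    show "packed v" unfolding ve by (rule packed_pack)
    show "length v = card U" by fact
    fix i j assume ij: "i \<in> U" "j \<in> U" and r: "(i, j) \<in> R1"
    have ij': "i \<in> {1..n}" "j \<in> {1..n}" using ij SU by auto
    have le: "at g i \<le> at g j" using G1 ij' r by blast
    show "at v (rk U i) \<le> at v (rk U j)" unfolding av[OF ij(1)] av[OF ij(2)] using le by simp
    assume "at v (rk U i) = at v (rk U j)"
    then have "at g i = at g j" unfolding av[OF ij(1)] av[OF ij(2)] using gU[OF ij(1)] gU[OF ij(2)] by simp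
    then show "qeq (n, R1, R2) i j" using G2 ij' r by blast
  qed
  have "U \<in> Bset (n, R1, R2) u v" unfolding Bset_def using up uW vW unfolding S_def by simp
  then show ?thesis using mu rec unfolding U_def by simp
qed

lemma B_recon:
  assumes P: "(n, R1, R2) \<in> WPP" and UB: "U \<in> Bset (n, R1, R2) u v"
  shows "(recon n u v U, maxl u) \<in> Aset (n, R1, R2) u v \<and> Fm n (recon n u v U) (maxl u) = U"
proof -
  define S where "S = {1..n} - U"
  have up: "upclosed1 (n, R1, R2) U" and uW: "u \<in> WLin (restr (n, R1, R2) S)"
    and vW: "v \<in> WLin (restr (n, R1, R2) U)" using UB unfolding Bset_def S_def by auto
  have Un: "U \<subseteq> {1..n}" and upc: "\<forall>i j. (i, j) \<in> R1 \<and> i \<in> U \<longrightarrow> j \<in> U"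
    using up unfolding upclosed1_def by auto
  have Sn: "S \<subseteq> {1..n}" unfolding S_def by auto
  have fS: "finite S" and fU: "finite U" using Sn Un finite_subset by blast+
  have pu: "packed u" and lu: "length u = card S"
    and U1: "\<forall>i\<in>S. \<forall>j\<in>S. (i, j) \<in> R1 \<longrightarrow> at u (rk S i) \<le> at u (rk S j)
        \<and> (at u (rk S i) = at u (rk S j) \<longrightarrow> qeq (n, R1, R2) i j)"
    using uW unfolding WLin_restr[OF Sn] by blast+
  have pv: "packed v" and lv: "length v = card U"
    and V1: "\<forall>i\<in>U. \<forall>j\<in>U. (i, j) \<in> R1 \<longrightarrow> at v (rk U i) \<le> at v (rk U j)
        \<and> (at v (rk U i) = at v (rk U j) \<longrightarrow> qeq (n, R1, R2) i j)"
    using vW unfolding WLin_restr[OF Un] by blast+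
  obtain k where su: "set u = {1..k}" using pu unfolding packed_def by blast
  obtain K where sv: "set v = {1..K}" using pv unfolding packed_def by blast
  have mu: "maxl u = k" by (rule maxl_interval[OF su])
  define g where "g = recon n u v U"
  have lg: "length g = n" unfolding g_def by (rule recon_length)
  have atg: "at g i = (if i \<in> U then at v (rk U i) + k else at u (rk S i))" if "i \<in> {1..n}" for i
    unfolding g_def recon_at[OF that] mu S_def ..
  have valS: "at g i \<in> {1..k}" if "i \<in> S" for i
  proof -
    have i: "i \<in> {1..n}" "i \<notin> U" using that unfolding S_def by auto
    have "rk S i \<in> {1..length u}" using rk_range[OF fS that] lu by simp
    then have "at u (rk S i) \<in> set u" by (rule at_in_set)
    then show ?thesis using atg[OF i(1)] i(2) su by simp
  qed
  have valU: "at g i \<in> {k+1..k+K}" if "i \<in> U" for i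
  proof -
    have i: "i \<in> {1..n}" using that Un by auto
    have "rk U i \<in> {1..length v}" using rk_range[OF fU that] lv by simp
    then have "at v (rk U i) \<in> set v" by (rule at_in_set)
    then show ?thesis using atg[OF i] that sv by simp
  qed
  have Fe: "Fm n g k = U"
  proof (intro set_eqI iffI)
    fix i assume "i \<in> Fm n g k"
    then have i: "i \<in> {1..n}" "k < at g i" unfolding Fm_def by auto
    show "i \<in> U"
    proof (rule ccontr)
      assume "i \<notin> U"
      then have "i \<in> S" using i unfolding S_def by simp
      then show False using valS i by fastforce
    qed
  next
    fix i assume i: "i \<in> U"
    then show "i \<in> Fm n g k" using valU[OF i] Un unfolding Fm_def by auto
  qed
  have Se: "{i\<in>{1..length g}. at g i \<le> k} = S"
  proof (intro set_eqI iffI)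
    fix i assume "i \<in> {i\<in>{1..length g}. at g i \<le> k}"
    then have i: "i \<in> {1..n}" "at g i \<le> k" using lg by auto
    have "i \<notin> U" using valU i(2) by fastforce
    then show "i \<in> S" unfolding S_def using i by simp
  next
    fix i assume "i \<in> S"
    then show "i \<in> {i\<in>{1..length g}. at g i \<le> k}" using valS lg Sn by auto
  qed
  have Ue: "{i\<in>{1..length g}. k < at g i} = U"
  proof -
    have "{i\<in>{1..length g}. k < at g i} = Fm n g k" unfolding Fm_def lg ..
    then show ?thesis using Fe by simp
  qed
  have fle: "filter (\<lambda>x. x \<le> k) g = u"
  proof (rule list_eq_rk[OF fS])
    show "length (filter (\<lambda>x. x \<le> k) g) = card S" using filter_at_le[of k g] unfolding Se by blast
    show "length u = card S" by fact
    show "\<forall>i\<in>S. at (filter (\<lambda>x. x \<le> k) g) (rk S i) = at u (rk S i)"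
    proof
      fix i assume i: "i \<in> S"
      then have i': "i \<in> {1..n}" "i \<notin> U" unfolding S_def by auto
      have "at (filter (\<lambda>x. x \<le> k) g) (rk S i) = at g i" using filter_at_le[of k g] i unfolding Se by blast
      also have "\<dots> = at u (rk S i)" using atg[OF i'(1)] i'(2) by simp
      finally show "at (filter (\<lambda>x. x \<le> k) g) (rk S i) = at u (rk S i)" .
    qed
  qed
  have fgt: "filter (\<lambda>x. k < x) g = map (\<lambda>x. x + k) v"
  proof (rule list_eq_rk[OF fU])
    show "length (filter (\<lambda>x. k < x) g) = card U" using filter_at_gt[of k g] unfolding Ue by blast
    show "length (map (\<lambda>x. x + k) v) = card U" using lv by simp
    show "\<forall>i\<in>U. at (filter (\<lambda>x. k < x) g) (rk U i) = at (map (\<lambda>x. x + k) v) (rk U i)"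
    proof
      fix i assume i: "i \<in> U"
      then have i': "i \<in> {1..n}" using Un by auto
      have r: "rk U i \<in> {1..length v}" using rk_range[OF fU i] lv by simp
      have "at (filter (\<lambda>x. k < x) g) (rk U i) = at g i" using filter_at_gt[of k g] i unfolding Ue by blast
      also have "\<dots> = at v (rk U i) + k" using atg[OF i'] i by simp
      also have "\<dots> = at (map (\<lambda>x. x + k) v) (rk U i)" using at_map[OF r] by simp
      finally show "at (filter (\<lambda>x. k < x) g) (rk U i) = at (map (\<lambda>x. x + k) v) (rk U i)" .
    qed
  qed
  have smv: "set (map (\<lambda>x. x + k) v) = {k+1..k+K}"
  proof -
    have "set (map (\<lambda>x. x + k) v) = (\<lambda>x. x + k) ` {1..K}" using sv by simp
    also have "\<dots> = {k+1..k+K}"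
    proof (intro set_eqI iffI)
      fix y assume "y \<in> (\<lambda>x. x + k) ` {1..K}" then show "y \<in> {k+1..k+K}" by auto
    next
      fix y assume y: "y \<in> {k+1..k+K}"
      then have "y - k \<in> {1..K}" "y = (y - k) + k" by auto
      then show "y \<in> (\<lambda>x. x + k) ` {1..K}" by (rule rev_image_eqI)
    qed
    finally show ?thesis .
  qed
  have pve: "pack (filter (\<lambda>x. k < x) g) = v"
  proof -
    have "pack (map (\<lambda>x. x + k) v) = map (\<lambda>x. x - k) (map (\<lambda>x. x + k) v)" by (rule pack_shift[OF smv])
    also have "\<dots> = v" by (simp add: comp_def)
    finally show ?thesis unfolding fgt .
  qed
  have sg: "set g = {1..k+K}"
  proof -
    have "set g = set (filter (\<lambda>x. x \<le> k) g) \<union> set (filter (\<lambda>x. k < x) g)" by auto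
    also have "\<dots> = {1..k} \<union> {k+1..k+K}" unfolding fle fgt smv su ..
    also have "\<dots> = {1..k+K}" by auto
    finally show ?thesis .
  qed
  have pg: "packed g" unfolding packed_def using sg by blast
  have mg: "maxl g = k + K" by (rule maxl_interval[OF sg])
  have R1s: "R1 \<subseteq> {1..n} \<times> {1..n}" using wpp_rels[OF P] by blast
  have key: "at g i \<le> at g j \<and> (at g i = at g j \<longrightarrow> qeq (n, R1, R2) i j)"
    if ij: "i \<in> {1..n}" "j \<in> {1..n}" and r: "(i, j) \<in> R1" for i j
  proof (cases "i \<in> U")
    case True
    then have jU: "j \<in> U" using upc r by blast
    have h: "at v (rk U i) \<le> at v (rk U j) \<and> (at v (rk U i) = at v (rk U j) \<longrightarrow> qeq (n, R1, R2) i j)"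
      using V1 True jU r by blast
    then show ?thesis using atg[OF ij(1)] atg[OF ij(2)] True jU by simp
  next
    case False
    then have iS: "i \<in> S" unfolding S_def using ij by simp
    show ?thesis
    proof (cases "j \<in> U")
      case True
      have "at g i \<le> k" "k < at g j" using valS[OF iS] valU[OF True] by auto
      then show ?thesis by simp
    next
      case False
      then have jS: "j \<in> S" unfolding S_def using ij by simp
      have h: "at u (rk S i) \<le> at u (rk S j) \<and> (at u (rk S i) = at u (rk S j) \<longrightarrow> qeq (n, R1, R2) i j)"
        using U1 iS jS r by blast
      then show ?thesis using atg[OF ij(1)] atg[OF ij(2)] \<open>i \<notin> U\<close> False by simp
    qed
  qed
  have gW: "g \<in> WLin (n, R1, R2)" unfolding WLin_tup
  proof (intro conjI ballI impI)
    show "packed g" "length g = n" by fact+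
    fix i j assume ij: "i \<in> {1..n}" "j \<in> {1..n}"
    {
      assume "(i, j) \<in> R1"
      then show "at g i \<le> at g j" using key[OF ij] by blast
    }
    assume "(i, j) \<in> R1 \<and> at g i = at g j"
    then show "qeq (n, R1, R2) i j" using key[OF ij] by blast
  qed
  have "(g, k) \<in> Aset (n, R1, R2) u v" unfolding Aset_def using gW mg fle pve by simp
  then show ?thesis using Fe unfolding g_def mu by simp
qed

lemma card_AB:
  assumes P: "(n, R1, R2) \<in> WPP"
  shows "card (Aset (n, R1, R2) u v) = card (Bset (n, R1, R2) u v)"
proof (rule bij_betw_same_card)
  show "bij_betw (\<lambda>(g, k). Fm n g k) (Aset (n, R1, R2) u v) (Bset (n, R1, R2) u v)"
  proof (rule bij_betw_imageI)
    show "inj_on (\<lambda>(g, k). Fm n g k) (Aset (n, R1, R2) u v)"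
    proof (rule inj_onI)
      fix x y assume x: "x \<in> Aset (n, R1, R2) u v" and y: "y \<in> Aset (n, R1, R2) u v"
        and e: "(\<lambda>(g, k). Fm n g k) x = (\<lambda>(g, k). Fm n g k) y"
      obtain g k where xe: "x = (g, k)" by (cases x) auto
      obtain g' k' where ye: "y = (g', k')" by (cases y) auto
      have a1: "k = maxl u \<and> g = recon n u v (Fm n g k)" using A_recon[OF P x[unfolded xe]] by blast
      have a2: "k' = maxl u \<and> g' = recon n u v (Fm n g' k')" using A_recon[OF P y[unfolded ye]] by blast
      have "Fm n g k = Fm n g' k'" using e unfolding xe ye by simp
      then show "x = y" unfolding xe ye using a1 a2 by metis
    qed
    show "(\<lambda>(g, k). Fm n g k) ` Aset (n, R1, R2) u v = Bset (n, R1, R2) u v"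
    proof
      show "(\<lambda>(g, k). Fm n g k) ` Aset (n, R1, R2) u v \<subseteq> Bset (n, R1, R2) u v"
      proof
        fix U assume "U \<in> (\<lambda>(g, k). Fm n g k) ` Aset (n, R1, R2) u v"
        then obtain g k where gk: "(g, k) \<in> Aset (n, R1, R2) u v" "U = Fm n g k" by auto
        have "Fm n g k \<in> Bset (n, R1, R2) u v" using A_recon[OF P gk(1)] by blast
        then show "U \<in> Bset (n, R1, R2) u v" using gk(2) by simp
      qed
      show "Bset (n, R1, R2) u v \<subseteq> (\<lambda>(g, k). Fm n g k) ` Aset (n, R1, R2) u v"
      proof
        fix U assume U: "U \<in> Bset (n, R1, R2) u v"
        have h: "(recon n u v U, maxl u) \<in> Aset (n, R1, R2) u v" "Fm n (recon n u v U) (maxl u) = U"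
          using B_recon[OF P U] by auto
        show "U \<in> (\<lambda>(g, k). Fm n g k) ` Aset (n, R1, R2) u v"
          by (rule rev_image_eqI[OF h(1)]) (simp add: h(2))
      qed
    qed
  qed
qed


definition Fc :: "wppdata \<Rightarrow> nat set \<Rightarrow> wppdata \<times> wppdata" where
  "Fc P U = (restr P ({1..fst P} - U), restr P U)"

lemma coprodH_mat_eq:
  "(coprodH_mat P pr :: 'k::field) = (\<Sum>U\<in>{U. upclosed1 P U}. ind (pr = Fc P U))"
proof -
  obtain P1 P2 where pr: "pr = (P1, P2)" by (cases pr) auto
  show ?thesis unfolding pr coprodH_mat_def Fc_def by simp
qed

lemma finite_UC: "finite {U. upclosed1 P U}"
proof -
  obtain n R1 R2 where P: "P = (n, R1, R2)" by (cases P) auto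
  have "{U. upclosed1 P U} \<subseteq> Pow {1..n}" unfolding P upclosed1_def by auto
  then show ?thesis by (rule finite_subset) simp
qed

lemma coprod_LHS_inner:
  assumes P: "(n, R1, R2) \<in> WPP"
  shows "(\<Sum>pr\<in>Fc (n, R1, R2) ` {U. upclosed1 (n, R1, R2) U}.
            coprodH_mat (n, R1, R2) pr * tensor_mat (\<lambda>P g. ind (g \<in> WLin P)) (\<lambda>P g. ind (g \<in> WLin P)) pr (u, v))
        = (of_nat (card (Bset (n, R1, R2) u v)) :: 'k::field)"
proof -
  define UC where "UC = {U. upclosed1 (n, R1, R2) U}"
  define Y where "Y = Fc (n, R1, R2) ` UC"
  define t where "t = (\<lambda>pr. tensor_mat (\<lambda>P g. ind (g \<in> WLin P)) (\<lambda>P g. ind (g \<in> WLin P)) pr (u, v) :: 'k)"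
  have fUC: "finite UC" unfolding UC_def by (rule finite_UC)
  have fY: "finite Y" unfolding Y_def using fUC by simp
  have "(\<Sum>pr\<in>Y. coprodH_mat (n, R1, R2) pr * t pr) = (\<Sum>pr\<in>Y. (\<Sum>U\<in>UC. ind (pr = Fc (n, R1, R2) U)) * t pr)"
    unfolding coprodH_mat_eq UC_def ..
  also have "\<dots> = (\<Sum>pr\<in>Y. \<Sum>U\<in>UC. ind (pr = Fc (n, R1, R2) U) * t pr)"
    by (simp only: sum_distrib_right)
  also have "\<dots> = (\<Sum>U\<in>UC. \<Sum>pr\<in>Y. ind (pr = Fc (n, R1, R2) U) * t pr)" by (rule sum.swap)
  also have "\<dots> = (\<Sum>U\<in>UC. t (Fc (n, R1, R2) U))"
  proof (rule sum.cong[OF refl])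
    fix U assume U: "U \<in> UC"
    have "Fc (n, R1, R2) U \<in> Y" unfolding Y_def using U by simp
    then show "(\<Sum>pr\<in>Y. ind (pr = Fc (n, R1, R2) U) * t pr) = t (Fc (n, R1, R2) U)"
      unfolding sum_ind_eq[OF fY] by simp
  qed
  also have "\<dots> = (\<Sum>U\<in>UC. ind (u \<in> WLin (restr (n, R1, R2) ({1..n} - U)) \<and> v \<in> WLin (restr (n, R1, R2) U)))"
    unfolding t_def Fc_def tensor_mat_def by (rule sum.cong[OF refl]) (auto simp: ind_def)
  also have "\<dots> = of_nat (card {U\<in>UC. u \<in> WLin (restr (n, R1, R2) ({1..n} - U)) \<and> v \<in> WLin (restr (n, R1, R2) U)})"
    by (rule sum_ind[OF fUC])
  also have "{U\<in>UC. u \<in> WLin (restr (n, R1, R2) ({1..n} - U)) \<and> v \<in> WLin (restr (n, R1, R2) U)} = Bset (n, R1, R2) u v"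
    unfolding UC_def Bset_def by simp
  finally show ?thesis unfolding Y_def t_def UC_def .
qed

lemma coprod_RHS_inner:
  "(\<Sum>g\<in>WLin P. ind (g \<in> WLin P) * coprodW_mat g (u, v)) = (of_nat (card (Aset P u v)) :: 'k::field)"
proof -
  define B where "B = (\<lambda>g. {k\<in>{0..maxl g}. u = filter (\<lambda>x. x \<le> k) g \<and> v = pack (filter (\<lambda>x. k < x) g)})"
  have "(\<Sum>g\<in>WLin P. ind (g \<in> WLin P) * (coprodW_mat g (u, v) :: 'k)) = (\<Sum>g\<in>WLin P. of_nat (card (B g)))"
  proof (rule sum.cong[OF refl])
    fix g assume g: "g \<in> WLin P"
    have "(coprodW_mat g (u, v) :: 'k) = (\<Sum>k\<in>{0..maxl g}. ind (u = filter (\<lambda>x. x \<le> k) g \<and> v = pack (filter (\<lambda>x. k < x) g)))"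
      unfolding coprodW_mat_def by simp
    also have "\<dots> = of_nat (card (B g))" unfolding B_def by (rule sum_ind) simp
    finally show "ind (g \<in> WLin P) * (coprodW_mat g (u, v) :: 'k) = of_nat (card (B g))" using g by simp
  qed
  also have "\<dots> = of_nat (\<Sum>g\<in>WLin P. card (B g))" by simp
  also have "(\<Sum>g\<in>WLin P. card (B g)) = card (SIGMA g:WLin P. B g)"
    by (rule card_SigmaI[symmetric]) (auto simp: finite_WLin B_def)
  also have "(SIGMA g:WLin P. B g) = Aset P u v" unfolding B_def Aset_def by auto
  finally show ?thesis .
qed

lemma part_coprod:
  assumes a: "a \<in> freevec WPP"
  shows "lin_ext (tensor_mat (\<lambda>P g. ind (g \<in> WLin P)) (\<lambda>P g. ind (g \<in> WLin P)))
              (coprodH a) = coprodW (phi' (a :: wppdata \<Rightarrow> 'k::field))"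
proof
  fix z :: "nat list \<times> nat list"
  obtain u v where z: "z = (u, v)" by (cases z) auto
  have fa: "finite (supp a)" and SW: "supp a \<subseteq> WPP" using a unfolding freevec_def by auto
  have L: "lin_ext (tensor_mat (\<lambda>P g. ind (g \<in> WLin P)) (\<lambda>P g. ind (g \<in> WLin P))) (coprodH a) z
     = (\<Sum>P\<in>supp a. a P * (\<Sum>pr\<in>Fc P ` {U. upclosed1 P U}. coprodH_mat P pr *
          tensor_mat (\<lambda>P g. ind (g \<in> WLin P)) (\<lambda>P g. ind (g \<in> WLin P)) pr z))"
    unfolding coprodH_def
  proof (rule lin_ext_comp[OF fa])
    fix P show "finite (Fc P ` {U. upclosed1 P U})" using finite_UC by simp
    show "supp (coprodH_mat P :: _ \<Rightarrow> 'k) \<subseteq> Fc P ` {U. upclosed1 P U}"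
    proof
      fix pr assume pr: "pr \<in> supp (coprodH_mat P :: _ \<Rightarrow> 'k)"
      show "pr \<in> Fc P ` {U. upclosed1 P U}"
      proof (rule ccontr)
        assume n: "pr \<notin> Fc P ` {U. upclosed1 P U}"
        have "(coprodH_mat P pr :: 'k) = (\<Sum>U\<in>{U. upclosed1 P U}. ind (pr = Fc P U))" by (rule coprodH_mat_eq)
        also have "\<dots> = 0" using n by (intro sum.neutral) (auto simp: ind_def)
        finally show False using pr unfolding supp_def by simp
      qed
    qed
  qed
  have R: "coprodW (phi' a) z = (\<Sum>P\<in>supp a. a P * (\<Sum>g\<in>WLin P. ind (g \<in> WLin P) * coprodW_mat g z))"
    unfolding coprodW_def phi'_def by (rule lin_ext_comp[OF fa]) (auto simp: finite_WLin supp_ind)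
  show "lin_ext (tensor_mat (\<lambda>P g. ind (g \<in> WLin P)) (\<lambda>P g. ind (g \<in> WLin P))) (coprodH a) z = coprodW (phi' a) z"
    unfolding L R
  proof (rule sum.cong[OF refl])
    fix P assume P: "P \<in> supp a"
    obtain n R1 R2 where Pt: "P = (n, R1, R2)" by (cases P) auto
    have PW: "(n, R1, R2) \<in> WPP" using P SW Pt by auto
    have "(\<Sum>pr\<in>Fc P ` {U. upclosed1 P U}. coprodH_mat P pr *
          tensor_mat (\<lambda>P g. ind (g \<in> WLin P)) (\<lambda>P g. ind (g \<in> WLin P)) pr z)
        = (of_nat (card (Bset (n, R1, R2) u v)) :: 'k)"
      unfolding Pt z by (rule coprod_LHS_inner[OF PW])
    also have "\<dots> = of_nat (card (Aset (n, R1, R2) u v))" using card_AB[OF PW] by simp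
    also have "\<dots> = (\<Sum>g\<in>WLin P. ind (g \<in> WLin P) * coprodW_mat g z)"
      unfolding Pt z by (rule coprod_RHS_inner[symmetric])
    finally show "a P * (\<Sum>pr\<in>Fc P ` {U. upclosed1 P U}. coprodH_mat P pr *
          tensor_mat (\<lambda>P g. ind (g \<in> WLin P)) (\<lambda>P g. ind (g \<in> WLin P)) pr z)
        = a P * (\<Sum>g\<in>WLin P. ind (g \<in> WLin P) * coprodW_mat g z)" by simp
  qed
qed


theorem mainTheorem7:
  shows "bij_betw (phi' :: (wppdata \<Rightarrow> 'k::field) \<Rightarrow> (nat list \<Rightarrow> 'k))
            (freevec WPP) (freevec PW)
       \<and> (\<forall>a\<in>freevec WPP. \<forall>b\<in>freevec WPP.
            phi' (prodH a b) = prodW (phi' a) (phi' (b :: wppdata \<Rightarrow> 'k)))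
       \<and> phi' (unitH :: wppdata \<Rightarrow> 'k) = unitW
       \<and> (\<forall>a\<in>freevec WPP.
            lin_ext (tensor_mat (\<lambda>P g. ind (g \<in> WLin P)) (\<lambda>P g. ind (g \<in> WLin P)))
              (coprodH a) = coprodW (phi' (a :: wppdata \<Rightarrow> 'k)))
       \<and> (\<forall>a\<in>freevec WPP. counitW (phi' a) = counitH (a :: wppdata \<Rightarrow> 'k))
       \<and> (\<forall>a\<in>freevec WPP. phi' a = psi (phi (a :: wppdata \<Rightarrow> 'k)))"
proof -
  have 1: "bij_betw (phi' :: (wppdata \<Rightarrow> 'k::field) \<Rightarrow> (nat list \<Rightarrow> 'k)) (freevec WPP) (freevec PW)"
    by (rule part_bij)
  have 2: "\<forall>a\<in>freevec WPP. \<forall>b\<in>freevec WPP.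
            phi' (prodH a b) = prodW (phi' a) (phi' (b :: wppdata \<Rightarrow> 'k))"
  proof (intro ballI)
    fix a b :: "wppdata \<Rightarrow> 'k" assume "a \<in> freevec WPP" "b \<in> freevec WPP"
    then show "phi' (prodH a b) = prodW (phi' a) (phi' b)" by (rule part_prod)
  qed
  have 3: "phi' (unitH :: wppdata \<Rightarrow> 'k) = unitW" by (rule part_unit)
  have 4: "\<forall>a\<in>freevec WPP.
            lin_ext (tensor_mat (\<lambda>P g. ind (g \<in> WLin P)) (\<lambda>P g. ind (g \<in> WLin P)))
              (coprodH a) = coprodW (phi' (a :: wppdata \<Rightarrow> 'k))"
  proof (intro ballI)
    fix a :: "wppdata \<Rightarrow> 'k" assume "a \<in> freevec WPP"
    then show "lin_ext (tensor_mat (\<lambda>P g. ind (g \<in> WLin P)) (\<lambda>P g. ind (g \<in> WLin P)))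
              (coprodH a) = coprodW (phi' a)" by (rule part_coprod)
  qed
  have 5: "\<forall>a\<in>freevec WPP. counitW (phi' a) = counitH (a :: wppdata \<Rightarrow> 'k)"
  proof (intro ballI)
    fix a :: "wppdata \<Rightarrow> 'k" assume "a \<in> freevec WPP"
    then show "counitW (phi' a) = counitH a" by (rule part_counit)
  qed
  have 6: "\<forall>a\<in>freevec WPP. phi' a = psi (phi (a :: wppdata \<Rightarrow> 'k))"
  proof (intro ballI)
    fix a :: "wppdata \<Rightarrow> 'k" assume "a \<in> freevec WPP"
    then show "phi' a = psi (phi a)" by (rule part_psi)
  qed
  show ?thesis by (intro conjI 1 2 3 4 5 6)
qed

end
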